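(* Let $L\ge 2$ and let $S=(d,N_1,\dots,N_L)$ be a neural network architecture. Let $\Omega\subset\mathbb{R}^d$ have non-empty interior, and let $\varrho:\mathbb{R}\to\mathbb{R}$ be locally Lipschitz continuous. If the set $\mathcal{RNN}_\varrho^\Omega(S)$ is convex, then $\varrho$ is a polynomial.
   Context: A neural network with architecture $S=(N_0,N_1,\dots,N_L)$ (with $N_0=d$ the input dimension) is a family $\Phi=((A_\ell,b_\ell))_{\ell=1}^L$ with $A_\ell\in\mathbb{R}^{N_\ell\times N_{\ell-1}}$, $b_\ell\in\mathbb{R}^{N_\ell}$; $\mathcal{NN}(S)$ denotes the set of all such networks. For an activation function $\varrho:\mathbb{R}\to\mathbb{R}$ and $\Omega\subset\mathbb{R}^d$, the realization $\mathrm{R}_\varrho^\Omega(\Phi):\Omega\to\mathbb{R}^{N_L}$ is $x\mapsto x_L$, where $x_0=x$, $x_\ell=\varrho(A_\ell x_{\ell-1}+b_\ell)$ for $\ell=1,\dots,L-1$ ($\varrho$ acting componentwise), and $x_L=A_Lx_{L-1}+b_L$. Further $\mathcal{RNN}_\varrho^\Omega(S)=\{\mathrm{R}_\varrho^\Omega(\Phi):\Phi\in\mathcal{NN}(S)\}$. *)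

theory Defs
  imports "HOL-Analysis.Analysis" "HOL-Computational_Algebra.Polynomial"
begin

(* Architecture S = (d, N_1, ..., N_L): the input dimension d is CARD('d) (input space real^'d),
   the list Ns = [N_1, ..., N_L] gives the remaining layer widths, so L = length Ns.
   Vectors in R^{N_l} are represented as nat => real (entries with index >= N_l are forced to 0).
   A matrix A in R^{N_l x N_{l-1}} is a function nat => nat => real; only entries A i j with
   i < N_l, j < N_{l-1} are ever used.
   The first layer (A_1, b_1) is given by rows W1 j :: real^'d (j < N_1) and biases b1. *)

type_synonym layer = "(nat \<Rightarrow> nat \<Rightarrow> real) \<times> (nat \<Rightarrow> real)"

definition affine_step :: "nat \<Rightarrow> nat \<Rightarrow> layer \<Rightarrow> (nat \<Rightarrow> real) \<Rightarrow> (nat \<Rightarrow> real)" where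
  "affine_step n m Ab v = (\<lambda>i. if i < m then (\<Sum>j<n. fst Ab i j * v j) + snd Ab i else 0)"

fun layers_eval :: "(real \<Rightarrow> real) \<Rightarrow> nat \<Rightarrow> nat list \<Rightarrow> layer list \<Rightarrow> (nat \<Rightarrow> real) \<Rightarrow> (nat \<Rightarrow> real)" where
  "layers_eval \<rho> n [m] [Ab] v = affine_step n m Ab v"
| "layers_eval \<rho> n (m # ms) (Ab # ls) v =
     layers_eval \<rho> m ms ls (\<lambda>i. if i < m then \<rho> (affine_step n m Ab v i) else 0)"
| "layers_eval \<rho> n _ _ v = (\<lambda>_. 0)"

type_synonym 'd network = "(nat \<Rightarrow> real ^ 'd) \<times> (nat \<Rightarrow> real) \<times> layer list"

definition is_network :: "nat list \<Rightarrow> 'd::finite network \<Rightarrow> bool" where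
  "is_network Ns \<Phi> \<longleftrightarrow> length (snd (snd \<Phi>)) + 1 = length Ns"

(* realization R_rho^Omega(Phi) (requires L >= 2, so the first layer is hidden);
   as a function on Omega, set to 0 outside Omega *)
definition realization :: "(real \<Rightarrow> real) \<Rightarrow> (real ^ 'd) set \<Rightarrow> nat list \<Rightarrow> 'd::finite network
    \<Rightarrow> (real ^ 'd \<Rightarrow> nat \<Rightarrow> real)" where
  "realization \<rho> \<Omega> Ns \<Phi> = (\<lambda>x.
     if x \<in> \<Omega> then
       (let (W1, b1, ls) = \<Phi>; N1 = hd Ns;
            x1 = (\<lambda>j. if j < N1 then \<rho> (W1 j \<bullet> x + b1 j) else 0)
        in layers_eval \<rho> N1 (tl Ns) ls x1)
     else (\<lambda>_. 0))"

definition RNN :: "(real \<Rightarrow> real) \<Rightarrow> (real ^ 'd) set \<Rightarrow> nat list \<Rightarrow> (real ^ 'd::finite \<Rightarrow> nat \<Rightarrow> real) set" where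
  "RNN \<rho> \<Omega> Ns = {realization \<rho> \<Omega> Ns \<Phi> | \<Phi>. is_network Ns \<Phi>}"

definition fun_set_convex :: "('a \<Rightarrow> nat \<Rightarrow> real) set \<Rightarrow> bool" where
  "fun_set_convex F \<longleftrightarrow> (\<forall>f\<in>F. \<forall>g\<in>F. \<forall>t::real. 0 \<le> t \<and> t \<le> 1 \<longrightarrow>
      (\<lambda>x i. t * f x i + (1 - t) * g x i) \<in> F)"

definition locally_lipschitz :: "(real \<Rightarrow> real) \<Rightarrow> bool" where
  "locally_lipschitz \<rho> \<longleftrightarrow> (\<forall>x. \<exists>e>0. \<exists>K. lipschitz_on K (cball x e) \<rho>)"

definition is_polynomial_fun :: "(real \<Rightarrow> real) \<Rightarrow> bool" where
  "is_polynomial_fun \<rho> \<longleftrightarrow> (\<exists>p :: real poly. \<forall>x. \<rho> x = poly p x)"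

end

theory Submission
  imports Defs "HOL-Computational_Algebra.Fundamental_Theorem_Algebra"
begin

definition Sop :: "(real \<Rightarrow> real) \<Rightarrow> complex poly \<Rightarrow> real \<Rightarrow> real \<Rightarrow> complex" where
  "Sop f P \<beta> h = (\<Sum>k\<le>degree P. coeff P k * complex_of_real (f (\<beta> + real k * h)))"

lemma Sop_ge:
  assumes "degree P \<le> N"
  shows "Sop f P \<beta> h = (\<Sum>k\<le>N. coeff P k * complex_of_real (f (\<beta> + real k * h)))"
  unfolding Sop_def
  by (rule sum.mono_neutral_left) (use assms in \<open>auto simp: coeff_eq_0\<close>)

lemma Sop_0[simp]: "Sop f 0 \<beta> h = 0"
  by (simp add: Sop_def)

lemma Sop_add: "Sop f (P + Q) \<beta> h = Sop f P \<beta> h + Sop f Q \<beta> h"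
proof -
  let ?N = "max (degree P) (degree Q)"
  have "degree (P + Q) \<le> ?N" by (rule degree_add_le) auto
  then show ?thesis
    by (simp add: Sop_ge[of _ ?N] sum.distrib distrib_right)
qed

lemma Sop_smult: "Sop f (smult c P) \<beta> h = c * Sop f P \<beta> h"
  by (simp add: Sop_ge[of "smult c P" "degree P"] Sop_def sum_distrib_left mult.assoc)

lemma Sop_pCons: "Sop f (pCons a P) \<beta> h = a * complex_of_real (f \<beta>) + Sop f P (\<beta> + h) h"
proof -
  have "Sop f (pCons a P) \<beta> h = (\<Sum>k\<le>Suc (degree P). coeff (pCons a P) k * complex_of_real (f (\<beta> + real k * h)))"
    by (rule Sop_ge) (simp add: degree_pCons_le)
  also have "\<dots> = (\<Sum>k\<le>degree P. coeff (pCons a P) (Suc k) * complex_of_real (f (\<beta> + real (Suc k) * h)))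
      + coeff (pCons a P) 0 * complex_of_real (f (\<beta> + real 0 * h))"
    by (rule sum.atMost_Suc_shift[THEN trans]) simp
  also have "\<dots> = a * complex_of_real (f \<beta>) + Sop f P (\<beta> + h) h"
    by (simp add: Sop_def algebra_simps)
  finally show ?thesis .
qed

lemma Sop_minus: "Sop f (- P) \<beta> h = - Sop f P \<beta> h"
  using Sop_smult[of f "-1" P] by simp

lemma Sop_diff: "Sop f (P - Q) \<beta> h = Sop f P \<beta> h - Sop f Q \<beta> h"
  using Sop_add[of f P "-Q"] Sop_minus[of f Q] by simp

lemma Sop_shift: "Sop f (pCons 0 P) \<beta> h = Sop f P (\<beta> + h) h"
  by (simp add: Sop_pCons)

definition Irel :: "(real \<Rightarrow> real) \<Rightarrow> complex poly set" where
  "Irel f = {P. \<forall>\<beta> h. Sop f P \<beta> h = 0}"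

lemma Irel_mult: "P \<in> Irel f \<Longrightarrow> Q * P \<in> Irel f"
proof (induction Q)
  case 0
  then show ?case by (simp add: Irel_def)
next
  case (pCons a Q)
  have "pCons a Q * P = smult a P + pCons 0 (Q * P)" by simp
  moreover have "Sop f (smult a P + pCons 0 (Q * P)) \<beta> h = 0" for \<beta> h
    using pCons by (simp add: Sop_add Sop_smult Sop_shift Irel_def)
  ultimately show ?case by (simp add: Irel_def)
qed

lemma Irel_diff: "P \<in> Irel f \<Longrightarrow> Q \<in> Irel f \<Longrightarrow> P - Q \<in> Irel f"
  by (simp add: Irel_def Sop_diff)

lemma Sop_monom_mult: "Sop f (monom 1 q * R) \<beta> h = Sop f R (\<beta> + real q * h) h"
proof (induction q arbitrary: \<beta>)
  case 0
  then show ?case by simp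
next
  case (Suc q)
  have "monom 1 (Suc q) * R = pCons 0 (monom 1 q * R)"
    by (simp add: monom_Suc)
  then show ?case using Suc by (simp add: Sop_shift algebra_simps)
qed

lemma Sop_pcompose_monom:
  assumes "q \<ge> 1"
  shows "Sop f (pcompose P (monom 1 q)) \<beta> h = Sop f P \<beta> (real q * h)"
proof (induction P arbitrary: \<beta>)
  case 0
  then show ?case by simp
next
  case (pCons a P)
  have "pcompose (pCons a P) (monom 1 q) = [:a:] + monom 1 q * pcompose P (monom 1 q)"
    by (simp add: pcompose_pCons)
  then have "Sop f (pcompose (pCons a P) (monom 1 q)) \<beta> h
      = Sop f [:a:] \<beta> h + Sop f P (\<beta> + real q * h) (real q * h)"
    by (simp add: Sop_add Sop_monom_mult pCons.IH)
  also have "\<dots> = Sop f (pCons a P) \<beta> (real q * h)"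
    by (simp add: Sop_pCons)
  finally show ?case .
qed

lemma Irel_pcompose: "P \<in> Irel f \<Longrightarrow> q \<ge> 1 \<Longrightarrow> pcompose P (monom 1 q) \<in> Irel f"
  by (simp add: Irel_def Sop_pcompose_monom)

lemma complex_dvd_power:
  fixes G :: "complex poly" and M :: nat
  assumes "G \<noteq> 0" "\<And>z. poly G z = 0 \<Longrightarrow> z ^ M = 1"
  shows "G dvd (monom 1 M - 1) ^ degree G"
  using assms
proof (induction "degree G" arbitrary: G rule: less_induct)
  case less
  show ?case
  proof (cases "degree G = 0")
    case True
    then have "is_unit G" using less.prems(1) by (simp add: is_unit_iff_degree)
    then show ?thesis by (rule unit_imp_dvd)
  next
    case False
    then have "\<not> (\<exists>a l. a \<noteq> 0 \<and> l = 0 \<and> G = pCons a l)" by auto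
    then obtain z where z: "poly G z = 0" using fundamental_theorem_of_algebra_alt by blast
    then obtain H where H: "G = [:-z,1:] * H" using poly_eq_0_iff_dvd by (metis dvdE)
    have H0: "H \<noteq> 0" using H less.prems(1) by auto
    have dG: "degree G = Suc (degree H)" unfolding H by (subst degree_mult_eq) (use H0 in auto)
    have "H dvd (monom 1 M - 1) ^ degree H"
    proof (rule less.hyps)
      show "degree H < degree G" using dG by simp
      show "H \<noteq> 0" by fact
      fix w assume "poly H w = 0"
      then have "poly G w = 0" using H by simp
      then show "w ^ M = 1" using less.prems(2) by blast
    qed
    moreover have "[:-z,1:] dvd (monom 1 M - 1)"
      using less.prems(2)[OF z] by (simp add: poly_eq_0_iff_dvd[symmetric] poly_monom)
    ultimately have "[:-z,1:] * H dvd (monom 1 M - 1) * (monom 1 M - 1) ^ degree H"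
      by (metis mult_dvd_mono)
    then show ?thesis using H dG by simp
  qed
qed

lemma pcompose_lin_monom: "pcompose [:-1, 1:] (monom 1 M) = (monom 1 M - 1 :: complex poly)"
proof -
  have "[:-1:] = (-1 :: complex poly)" by (simp add: one_pCons)
  then show ?thesis by (simp add: pcompose_pCons)
qed

lemma pcompose_power: "pcompose (p ^ D) q = (pcompose p q) ^ D"
  by (induction D) (simp_all add: pcompose_mult one_pCons pcompose_pCons)

lemma relation_to_diff:
  assumes "P0 \<in> Irel f" "P0 \<noteq> 0"
  shows "\<exists>D. ([:-1,1:] ^ D :: complex poly) \<in> Irel f"
proof -
  obtain G where G: "G \<in> Irel f \<and> G \<noteq> 0" and Gmin: "\<forall>P. P \<in> Irel f \<and> P \<noteq> 0 \<longrightarrow> degree G \<le> degree P"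
    using ex_has_least_nat[of "\<lambda>P. P \<in> Irel f \<and> P \<noteq> 0" P0 degree] assms by blast
  have Gdvd: "G dvd P" if "P \<in> Irel f" for P
  proof -
    have "P mod G = P - (P div G) * G" by (simp add: minus_div_mult_eq_mod)
    then have "P mod G \<in> Irel f" using Irel_diff[OF that Irel_mult[OF conjunct1[OF G]]] by simp
    moreover have "P mod G = 0 \<or> degree (P mod G) < degree G" using degree_mod_less G by blast
    ultimately have "P mod G = 0" using Gmin by force
    then show ?thesis by (simp add: mod_eq_0_iff_dvd)
  qed
  have c0: "coeff G 0 \<noteq> 0"
  proof
    assume c: "coeff G 0 = 0"
    obtain a H where aH: "G = pCons a H" by (cases G) auto
    have a0: "a = 0" using c aH by simp
    have H0: "H \<noteq> 0" using aH a0 G by auto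
    have "H \<in> Irel f"
      unfolding Irel_def
    proof (intro CollectI allI)
      fix \<beta> h
      have "Sop f G (\<beta> - h) h = 0" using G by (simp add: Irel_def)
      then show "Sop f H \<beta> h = 0" using aH a0 by (simp add: Sop_shift)
    qed
    moreover have "degree H < degree G" using aH a0 H0 by simp
    ultimately show False using Gmin H0 by force
  qed
  define D where "D = degree G"
  define M :: nat where "M = fact D"
  have roots: "z ^ M = 1" if z: "poly G z = 0" for z
  proof -
    have z0: "z \<noteq> 0" using c0 z by (auto simp: poly_0_coeff_0)
    have pow: "poly G (z ^ q) = 0" if "q \<ge> 1" for q
    proof -
      have "G dvd pcompose G (monom 1 q)"
        using Gdvd Irel_pcompose G that by blast
      then have "poly (pcompose G (monom 1 q)) z = 0" using z by (metis dvdE mult_eq_0_iff poly_mult)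
      then show ?thesis by (simp add: poly_pcompose poly_monom)
    qed
    let ?R = "{x. poly G x = 0}"
    have finR: "finite ?R" using G poly_roots_finite by blast
    have cardR: "card ?R \<le> D" using G card_poly_roots_bound D_def by blast
    have img: "(\<lambda>j. z ^ j) ` {1..D+1} \<subseteq> ?R" using pow by auto
    have "card ((\<lambda>j. z ^ j) ` {1..D+1}) \<le> D" using card_mono[OF finR img] cardR by linarith
    then have "\<not> inj_on (\<lambda>j. z ^ j) {1..D+1}" by (intro pigeonhole) simp
    then obtain a b where ab: "a \<in> {1..D+1}" "b \<in> {1..D+1}" "a < b" "z ^ a = z ^ b"
      unfolding inj_on_def by (metis linorder_neqE_nat)
    have "z ^ b = z ^ a * z ^ (b - a)" using ab(3) by (simp add: power_add[symmetric])
    then have e1: "z ^ (b - a) = 1" using ab(4) z0 by simp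
    have "(b - a) dvd M" unfolding M_def using ab by (intro dvd_fact) auto
    then obtain c where "M = (b - a) * c" by blast
    then show ?thesis using e1 by (simp add: power_mult)
  qed
  have "G dvd (monom 1 M - 1) ^ D" using complex_dvd_power[of G M] G roots D_def by blast
  then obtain Q where Q: "(monom 1 M - 1) ^ D = G * Q" by blast
  have inI: "(monom 1 M - 1) ^ D \<in> Irel f" using Q Irel_mult[of G f Q] G by (simp add: mult.commute)
  have M1: "M \<ge> 1" unfolding M_def by simp
  have "pcompose ([:-1,1:] ^ D) (monom 1 M) = ((monom 1 M - 1) ^ D :: complex poly)"
    unfolding pcompose_power pcompose_lin_monom ..
  then have "Sop f ([:-1,1:] ^ D) \<beta> (real M * h) = 0" for \<beta> h
    using inI Sop_pcompose_monom[OF M1, of f "[:-1,1:] ^ D" \<beta> h] by (simp add: Irel_def)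
  then have "Sop f ([:-1,1:] ^ D) \<beta> t = 0" for \<beta> t
    using \<open>Sop f ([:-1,1:] ^ D) \<beta> (real M * (t / real M)) = 0\<close>  M1 by simp
  then show ?thesis unfolding Irel_def by blast
qed

definition deg_lt :: "real poly \<Rightarrow> nat \<Rightarrow> bool" where
  "deg_lt p D \<longleftrightarrow> p = 0 \<or> degree p < D"

lemma Sop_fun_diff: "Sop (\<lambda>x. F x - G x) P \<beta> h = Sop F P \<beta> h - Sop G P \<beta> h"
  by (simp add: Sop_def sum_subtractf[symmetric] algebra_simps)

lemma lin_mult: "[:-1,1:] * Q = pCons 0 Q - (Q :: complex poly)"
  by (simp add: algebra_simps)

lemma Sop_step: "Sop F ([:-1,1:] * Q) \<beta> t = Sop (\<lambda>x. F (x + t) - F x) Q \<beta> t"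
proof -
  have "Sop F Q (\<beta> + t) t = Sop (\<lambda>x. F (x + t)) Q \<beta> t"
    by (simp add: Sop_def algebra_simps)
  then show ?thesis by (simp add: lin_mult Sop_diff Sop_shift Sop_fun_diff)
qed

lemma deg_shift:
  assumes "deg_lt p (Suc D)"
  shows "deg_lt (pcompose p [:t,1:] - p) D"
proof (cases "degree p = 0")
  case True
  then obtain c where "p = [:c:]" by (metis degree_eq_zeroE)
  then show ?thesis by (simp add: deg_lt_def)
next
  case False
  let ?d = "degree p"
  have dp: "?d \<le> D" using assms False by (auto simp: deg_lt_def)
  have dc: "degree (pcompose p [:t,1:]) = ?d" by (simp add: degree_pcompose)
  have lc: "lead_coeff (pcompose p [:t,1:]) = lead_coeff p"
    by (subst lead_coeff_comp) auto
  have le: "degree (pcompose p [:t,1:] - p) \<le> ?d"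
    using degree_diff_le[of "pcompose p [:t,1:]" ?d p] dc by simp
  have c0: "coeff (pcompose p [:t,1:] - p) ?d = 0" using lc dc by simp
  show ?thesis
  proof (cases "pcompose p [:t,1:] - p = 0")
    case True then show ?thesis by (simp add: deg_lt_def)
  next
    case nz: False
    have "degree (pcompose p [:t,1:] - p) \<noteq> ?d"
      using c0 nz leading_coeff_0_iff by metis
    then show ?thesis using le dp by (simp add: deg_lt_def)
  qed
qed

lemma Sop_poly_zero:
  assumes "deg_lt p D"
  shows "Sop (poly p) ([:-1,1:] ^ D) \<beta> t = 0"
  using assms
proof (induction D arbitrary: p)
  case 0
  then show ?case by (simp add: deg_lt_def Sop_def)
next
  case (Suc D)
  have eq: "(\<lambda>x. poly p (x + t) - poly p x) = poly (pcompose p [:t,1:] - p)"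
    by (rule ext) (simp add: poly_pcompose algebra_simps)
  have "Sop (poly p) ([:-1,1:] ^ Suc D) \<beta> t = Sop (poly p) ([:-1,1:] * [:-1,1:] ^ D) \<beta> t"
    by simp
  also have "\<dots> = Sop (poly (pcompose p [:t,1:] - p)) ([:-1,1:] ^ D) \<beta> t"
    by (simp only: Sop_step eq)
  also have "\<dots> = 0" using Suc.IH deg_shift[OF Suc.prems] by blast
  finally show ?case .
qed

lemma forward_zero:
  assumes rel: "\<forall>\<beta>. Sop F ([:-1,1:] ^ D) \<beta> t = 0"
    and init: "\<forall>k<D. F (x0 + real k * t) = 0"
  shows "F (x0 + real j * t) = 0"
proof (induction j rule: less_induct)
  case (less j)
  show ?case
  proof (cases "j < D")
    case True then show ?thesis using init by blast
  next
    case False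
    define i where "i = j - D"
    have j: "j = i + D" using False i_def by simp
    let ?T = "[:-1,1:] ^ D :: complex poly"
    have dT: "degree ?T = D" by (simp add: degree_linear_power)
    have cT: "coeff ?T D = 1" by (simp add: coeff_linear_power)
    have "0 = Sop F ?T (x0 + real i * t) t" using rel by simp
    also have "\<dots> = (\<Sum>k<D. coeff ?T k * complex_of_real (F (x0 + real i * t + real k * t)))
        + coeff ?T D * complex_of_real (F (x0 + real i * t + real D * t))"
      unfolding Sop_def dT by (simp add: lessThan_Suc_atMost[symmetric])
    also have "(\<Sum>k<D. coeff ?T k * complex_of_real (F (x0 + real i * t + real k * t))) = 0"
    proof (rule sum.neutral, intro ballI)
      fix k assume "k \<in> {..<D}"
      then have "i + k < j" using j by simp
      then have "F (x0 + real (i + k) * t) = 0" using less.IH by blast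
      then show "coeff ?T k * complex_of_real (F (x0 + real i * t + real k * t)) = 0"
        by (simp add: algebra_simps)
    qed
    finally have "F (x0 + real i * t + real D * t) = 0" using cT by simp
    then show ?thesis using j by (simp add: algebra_simps)
  qed
qed

lemma interp:
  fixes ys :: "nat \<Rightarrow> real"
  assumes "inj_on ys {..<D}"
  shows "\<exists>q. deg_lt q D \<and> (\<forall>k<D. poly q (ys k) = vals k)"
  using assms
proof (induction D)
  case 0
  then show ?case by (auto simp: deg_lt_def)
next
  case (Suc D)
  have "inj_on ys {..<D}" using Suc.prems by (rule inj_on_subset) auto
  then obtain q where q: "deg_lt q D" "\<forall>k<D. poly q (ys k) = vals k" using Suc.IH by blast
  define \<pi> where "\<pi> = (\<Prod>k<D. [:- ys k, 1:])"
  have poly\<pi>: "poly \<pi> y = (\<Prod>k<D. y - ys k)" for y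
    by (simp add: \<pi>_def poly_prod)
  have "ys D \<noteq> ys k" if "k < D" for k
    using Suc.prems that unfolding inj_on_def by force
  then have nz: "poly \<pi> (ys D) \<noteq> 0" by (simp add: poly\<pi>)
  have d\<pi>: "degree \<pi> \<le> D"
    unfolding \<pi>_def using degree_prod_sum_le[of "{..<D}" "\<lambda>k. [:- ys k, 1:]"] by simp
  define c where "c = (vals D - poly q (ys D)) / poly \<pi> (ys D)"
  define q' where "q' = q + smult c \<pi>"
  have "degree q' \<le> D"
  proof -
    have "degree q \<le> D" using q(1) by (auto simp: deg_lt_def)
    then show ?thesis unfolding q'_def
      using degree_add_le[of q D "smult c \<pi>"] degree_smult_le[of c \<pi>] d\<pi> by linarith
  qed
  then have "deg_lt q' (Suc D)" by (simp add: deg_lt_def)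
  moreover have "\<forall>k<Suc D. poly q' (ys k) = vals k"
  proof (intro allI impI)
    fix k assume k: "k < Suc D"
    show "poly q' (ys k) = vals k"
    proof (cases "k < D")
      case True
      then have "poly \<pi> (ys k) = 0" by (auto simp: poly\<pi> intro: prod_zero)
      then show ?thesis using q True by (simp add: q'_def)
    next
      case False
      then have "k = D" using k by simp
      then show ?thesis using nz by (simp add: q'_def c_def)
    qed
  qed
  ultimately show ?case by blast
qed

lemma vanish:
  fixes ys :: "nat \<Rightarrow> real"
  assumes "deg_lt q D" "inj_on ys {..<D}" "\<forall>k<D. poly q (ys k) = 0"
  shows "q = 0"
proof (rule ccontr)
  assume q0: "q \<noteq> 0"
  then have dq: "degree q < D" using assms(1) by (simp add: deg_lt_def)
  have sub: "ys ` {..<D} \<subseteq> {x. poly q x = 0}" using assms(3) by auto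
  have "D = card (ys ` {..<D})" using card_image[OF assms(2)] by simp
  also have "\<dots> \<le> card {x. poly q x = 0}" using card_mono[OF poly_roots_finite[OF q0] sub] .
  also have "\<dots> \<le> degree q" using card_poly_roots_bound[OF q0] .
  finally show False using dq by simp
qed

lemma frechet:
  fixes F :: "real \<Rightarrow> real"
  assumes cont: "continuous_on UNIV F"
    and rel: "\<forall>\<beta> t. Sop F ([:-1,1:] ^ D) \<beta> t = 0"
  shows "\<exists>p. \<forall>x. F x = poly p x"
proof -
  have injr: "inj_on (\<lambda>k. real k) {..<D}" by (auto simp: inj_on_def)
  obtain p where p: "deg_lt p D" "\<forall>k<D. poly p (real k) = F (real k)"
    using interp[OF injr, of F] by blast
  define g where "g x = F x - poly p x" for x
  have relg: "\<forall>\<beta> t. Sop g ([:-1,1:] ^ D) \<beta> t = 0"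
    using rel Sop_poly_zero[OF p(1)] unfolding g_def by (simp add: Sop_fun_diff)
  have gint: "g (real k) = 0" if "k < D" for k using p(2) that by (simp add: g_def)
  have zero: "g (- real K + real j / 2 ^ l) = 0" for K j l :: nat
  proof -
    define t :: real where "t = 1 / 2 ^ l"
    define x0 :: real where "x0 = - real K"
    have t0: "t > 0" by (simp add: t_def)
    have inj: "inj_on (\<lambda>k. x0 + real k * t) {..<D}" using t0 by (auto simp: inj_on_def)
    obtain q where q: "deg_lt q D" "\<forall>k<D. poly q (x0 + real k * t) = g (x0 + real k * t)"
      using interp[OF inj, of "\<lambda>k. g (x0 + real k * t)"] by blast
    define F' where "F' x = g x - poly q x" for x
    have relF: "\<forall>\<beta>. Sop F' ([:-1,1:] ^ D) \<beta> t = 0"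
      using relg Sop_poly_zero[OF q(1)] unfolding F'_def by (simp add: Sop_fun_diff)
    have initF: "\<forall>k<D. F' (x0 + real k * t) = 0" using q(2) by (simp add: F'_def)
    have allF: "F' (x0 + real i * t) = 0" for i using forward_zero[OF relF initF] .
    have "poly q (real m) = 0" if "m < D" for m
    proof -
      have "x0 + real ((K + m) * 2 ^ l) * t = real m"
        by (simp add: x0_def t_def field_simps)
      then have "F' (real m) = 0" using allF by metis
      then show ?thesis using gint[OF that] by (simp add: F'_def)
    qed
    then have "q = 0" using vanish[OF q(1) injr] by blast
    then have "g (x0 + real j * t) = 0" using allF[of j] by (simp add: F'_def)
    then show ?thesis by (simp add: x0_def t_def)
  qed
  have "g x = 0" for x
  proof -
    define K :: nat where "K = nat \<lceil>- x\<rceil>"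
    define y where "y = x + real K"
    have y0: "y \<ge> 0" unfolding y_def K_def by linarith
    define a where "a l = - real K + real (nat \<lfloor>y * 2 ^ l\<rfloor>) / 2 ^ l" for l :: nat
    have ga: "g (a l) = 0" for l unfolding a_def by (rule zero)
    have bound: "norm (a l - x) \<le> (1/2) ^ l" for l
    proof -
      have fl: "real (nat \<lfloor>y * 2 ^ l\<rfloor>) = of_int \<lfloor>y * 2 ^ l\<rfloor>" using y0 by simp
      have e: "real (nat \<lfloor>y * 2 ^ l\<rfloor>) / 2 ^ l - y = (of_int \<lfloor>y * 2 ^ l\<rfloor> - y * 2 ^ l) / 2 ^ l"
        unfolding fl by (simp add: field_simps)
      have "\<bar>of_int \<lfloor>y * 2 ^ l\<rfloor> - y * 2 ^ l\<bar> \<le> (1::real)" by linarith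
      then have "\<bar>real (nat \<lfloor>y * 2 ^ l\<rfloor>) / 2 ^ l - y\<bar> \<le> 1 / 2 ^ l"
        unfolding e abs_divide by (simp add: divide_right_mono)
      then show ?thesis unfolding a_def y_def by (simp add: power_one_over algebra_simps)
    qed
    have "(\<lambda>l. a l - x) \<longlonglongrightarrow> 0"
      by (rule Lim_null_comparison[OF always_eventually[OF allI[OF bound]]])
         (simp add: LIMSEQ_power_zero)
    then have lim: "a \<longlonglongrightarrow> x" by (simp add: LIM_zero_iff)
    have "continuous_on UNIV g" unfolding g_def by (intro continuous_intros cont)
    then have "isCont g x" by (simp add: continuous_on_eq_continuous_at)
    then have "(\<lambda>l. g (a l)) \<longlonglongrightarrow> g x" using isCont_tendsto_compose lim by blast
    then show ?thesis using ga by (simp add: LIMSEQ_const_iff)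
  qed
  then show ?thesis unfolding g_def by (intro exI[of _ p]) simp
qed

lemma relation_poly:
  fixes \<rho> :: "real \<Rightarrow> real" and c :: "nat \<Rightarrow> real"
  assumes cont: "continuous_on UNIV \<rho>"
    and cnz: "\<exists>k<n. c k \<noteq> 0"
    and rel: "\<forall>\<beta> h. (\<Sum>k<n. c k * \<rho> (\<beta> + real k * h)) = 0"
  shows "\<exists>p. \<forall>x. \<rho> x = poly p x"
proof -
  define P0 where "P0 = Poly (map (\<lambda>k. complex_of_real (c k)) [0..<n])"
  have cP: "coeff P0 k = (if k < n then complex_of_real (c k) else 0)" for k
    by (simp add: P0_def nth_default_def)
  have "P0 \<noteq> 0" using cnz cP by (metis coeff_0 of_real_eq_0_iff)
  moreover have "P0 \<in> Irel \<rho>"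
  proof -
    have dP: "degree P0 \<le> n" using degree_Poly[of "map (\<lambda>k. complex_of_real (c k)) [0..<n]"]
      by (simp add: P0_def)
    have "Sop \<rho> P0 \<beta> h = 0" for \<beta> h
    proof -
      have "Sop \<rho> P0 \<beta> h = (\<Sum>k\<le>n. coeff P0 k * complex_of_real (\<rho> (\<beta> + real k * h)))"
        by (rule Sop_ge[OF dP])
      also have "\<dots> = (\<Sum>k<n. coeff P0 k * complex_of_real (\<rho> (\<beta> + real k * h)))"
        by (simp add: cP lessThan_Suc_atMost[symmetric])
      also have "\<dots> = complex_of_real (\<Sum>k<n. c k * \<rho> (\<beta> + real k * h))"
        by (simp add: cP)
      also have "\<dots> = 0" using rel by simp
      finally show ?thesis .
    qed
    then show ?thesis by (simp add: Irel_def)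
  qed
  ultimately obtain D where "([:-1,1:] ^ D :: complex poly) \<in> Irel \<rho>"
    using relation_to_diff by blast
  then have "\<forall>\<beta> t. Sop \<rho> ([:-1,1:] ^ D) \<beta> t = 0" by (simp add: Irel_def)
  then show ?thesis using frechet[OF cont] by blast
qed

lemma subspace_orth:
  fixes S :: "(nat \<Rightarrow> real) set"
  assumes "s0 \<in> S" "\<forall>a\<in>S. \<forall>b\<in>S. (\<lambda>i. a i + b i) \<in> S" "\<forall>a\<in>S. \<forall>c. (\<lambda>i. c * a i) \<in> S"
  shows "(\<forall>y. \<exists>s\<in>S. \<forall>k<n. s k = y k) \<or> (\<exists>c. (\<exists>k<n. c k \<noteq> 0) \<and> (\<forall>s\<in>S. (\<Sum>k<n. c k * s k) = 0))"
  using assms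
proof (induction n arbitrary: S s0)
  case 0
  then show ?case by auto
next
  case (Suc n)
  show ?case
  proof (cases "\<exists>s\<in>S. s n \<noteq> 0")
    case False
    then have "\<forall>s\<in>S. (\<Sum>k<Suc n. (if k = n then 1 else 0) * s k) = 0"
      by (simp add: if_distrib cong: if_cong)
    then show ?thesis by (intro disjI2 exI[of _ "\<lambda>k. if k = n then 1 else 0"]) auto
  next
    case True
    then obtain s1 where s1: "s1 \<in> S" "s1 n \<noteq> 0" by blast
    define e where "e = (\<lambda>i. (1 / s1 n) * s1 i)"
    have eS: "e \<in> S" using Suc.prems(3) s1 unfolding e_def by blast
    have en: "e n = 1" using s1 by (simp add: e_def)
    define S' where "S' = {s\<in>S. s n = 0}"
    have z0: "(\<lambda>i. 0 * e i) \<in> S" by (rule Suc.prems(3)[rule_format, OF eS])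
    have z: "(\<lambda>i. 0 * e i) \<in> S'" using z0 unfolding S'_def by simp
    have add': "\<forall>a\<in>S'. \<forall>b\<in>S'. (\<lambda>i. a i + b i) \<in> S'" using Suc.prems(2) by (auto simp: S'_def)
    have sc': "\<forall>a\<in>S'. \<forall>c. (\<lambda>i. c * a i) \<in> S'" using Suc.prems(3) by (auto simp: S'_def)
    have proj: "(\<lambda>i. s i + (- s n) * e i) \<in> S'" if "s \<in> S" for s
    proof -
      have m: "(\<lambda>i. (- s n) * e i) \<in> S" using Suc.prems(3) eS by blast
      have "(\<lambda>i. s i + (- s n) * e i) \<in> S" by (rule Suc.prems(2)[rule_format, OF that m])
      then show ?thesis unfolding S'_def using en by simp
    qed
    from Suc.IH[OF z add' sc'] show ?thesis
    proof
      assume surj: "\<forall>y. \<exists>s\<in>S'. \<forall>k<n. s k = y k"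
      show ?thesis
      proof (intro disjI1 allI)
        fix y :: "nat \<Rightarrow> real"
        obtain t where t: "t \<in> S'" "\<forall>k<n. t k = y k - y n * e k" using surj[rule_format, of "\<lambda>k. y k - y n * e k"] by blast
        have m: "(\<lambda>i. y n * e i) \<in> S" using Suc.prems(3) eS by blast
        have "t \<in> S" using t(1) by (simp add: S'_def)
        then have "(\<lambda>i. t i + y n * e i) \<in> S" by (rule Suc.prems(2)[rule_format, OF _ m])
        moreover have "\<forall>k<Suc n. t k + y n * e k = y k"
        proof (intro allI impI)
          fix k assume "k < Suc n"
          then consider "k < n" | "k = n" by linarith
          then show "t k + y n * e k = y k"
          proof cases
            case 1 then show ?thesis using t(2) by simp
          next
            case 2
            have "t n = 0" using t(1) by (simp add: S'_def)
            then show ?thesis using 2 en by simp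
          qed
        qed
        ultimately show "\<exists>s\<in>S. \<forall>k<Suc n. s k = y k" by (intro bexI[where x="\<lambda>i. t i + y n * e i"]) simp_all
      qed
    next
      assume "\<exists>c. (\<exists>k<n. c k \<noteq> 0) \<and> (\<forall>s\<in>S'. (\<Sum>k<n. c k * s k) = 0)"
      then obtain c where c: "\<exists>k<n. c k \<noteq> 0" "\<forall>s\<in>S'. (\<Sum>k<n. c k * s k) = 0" by blast
      define c' where "c' = (\<lambda>k. if k = n then - (\<Sum>j<n. c j * e j) else c k)"
      have "\<forall>s\<in>S. (\<Sum>k<Suc n. c' k * s k) = 0"
      proof
        fix s assume sS: "s \<in> S"
        have "(\<Sum>k<n. c k * (s k + (- s n) * e k)) = 0" using bspec[OF c(2) proj[OF sS]] by simp
        then have "(\<Sum>k<n. c k * s k) - s n * (\<Sum>k<n. c k * e k) = 0"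
        proof -
          have "(\<Sum>k<n. c k * (s k + (- s n) * e k)) = (\<Sum>k<n. c k * s k - s n * (c k * e k))"
            by (rule sum.cong) (auto simp: algebra_simps)
          also have "\<dots> = (\<Sum>k<n. c k * s k) - s n * (\<Sum>k<n. c k * e k)"
            by (simp add: sum_subtractf sum_distrib_left)
          finally show ?thesis using \<open>(\<Sum>k<n. c k * (s k + (- s n) * e k)) = 0\<close> by simp
        qed
        moreover have "(\<Sum>k<n. c' k * s k) = (\<Sum>k<n. c k * s k)"
          by (rule sum.cong) (auto simp: c'_def)
        ultimately show "(\<Sum>k<Suc n. c' k * s k) = 0" by (simp add: c'_def algebra_simps)
      qed
      moreover have "\<exists>k<Suc n. c' k \<noteq> 0"
      proof -
        obtain k where "k < n" "c k \<noteq> 0" using c(1) by blast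
        then have "k < Suc n" "c' k \<noteq> 0" by (auto simp: c'_def)
        then show ?thesis by blast
      qed
      ultimately show ?thesis by (intro disjI2 exI[where x=c']) simp
    qed
  qed
qed

definition scale_last :: "real \<Rightarrow> layer list \<Rightarrow> layer list" where
  "scale_last c ls = butlast ls @ [(\<lambda>i j. c * fst (last ls) i j, \<lambda>i. c * snd (last ls) i)]"

lemma length_scale_last: "ls \<noteq> [] \<Longrightarrow> length (scale_last c ls) = length ls"
  by (simp add: scale_last_def)

lemma layers_scale:
  "length ls = length ms \<Longrightarrow> ms \<noteq> [] \<Longrightarrow>
    layers_eval \<rho> n ms (scale_last c ls) v = (\<lambda>i. c * layers_eval \<rho> n ms ls v i)"
proof (induction ms arbitrary: n ls v)
  case Nil
  then show ?case by simp
next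
  case (Cons m ms)
  obtain Ab ls' where ls: "ls = Ab # ls'" using Cons.prems by (cases ls) auto
  show ?case
  proof (cases ms)
    case Nil
    then have "ls' = []" using Cons.prems ls by simp
    then show ?thesis using Nil ls
      by (auto simp: scale_last_def affine_step_def sum_distrib_left algebra_simps)
  next
    case (Cons m2 ms'')
    then obtain a2 ls'' where ls': "ls' = a2 # ls''" using Cons.prems ls by (cases ls') auto
    have sl: "scale_last c ls = Ab # scale_last c ls'" using ls ls' by (simp add: scale_last_def)
    obtain a3 ls3 where sl': "scale_last c ls' = a3 # ls3" using ls' by (cases "scale_last c ls'") (auto simp: scale_last_def)
    have "layers_eval \<rho> n (m # ms) (scale_last c ls) v
        = layers_eval \<rho> m ms (scale_last c ls') (\<lambda>i. if i < m then \<rho> (affine_step n m Ab v i) else 0)"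
      using sl sl' Cons by simp
    also have "\<dots> = (\<lambda>i. c * layers_eval \<rho> m ms ls' (\<lambda>i. if i < m then \<rho> (affine_step n m Ab v i) else 0) i)"
      using Cons.IH[of ls'] Cons.prems ls Cons by simp
    also have "\<dots> = (\<lambda>i. c * layers_eval \<rho> n (m # ms) ls v i)"
      using ls ls' Cons by simp
    finally show ?thesis .
  qed
qed

lemma RNN_scale:
  assumes L: "length Ns \<ge> 2" and f: "f \<in> RNN \<rho> \<Omega> Ns"
  shows "(\<lambda>x i. c * f x i) \<in> RNN \<rho> \<Omega> Ns"
proof -
  obtain W1 b1 ls where net: "is_network Ns (W1, b1, ls)" and fr: "f = realization \<rho> \<Omega> Ns (W1, b1, ls)"
    using f unfolding RNN_def by auto
  have tl: "tl Ns \<noteq> []" using L by (cases Ns) auto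
  have len: "length ls = length (tl Ns)" "tl Ns \<noteq> []" "ls \<noteq> []"
    using net L tl by (auto simp: is_network_def)
  have "realization \<rho> \<Omega> Ns (W1, b1, scale_last c ls) = (\<lambda>x i. c * f x i)"
    unfolding fr realization_def using layers_scale[OF len(1,2)] by (auto simp: Let_def)
  moreover have "is_network Ns (W1, b1, scale_last c ls)"
    using net len by (simp add: is_network_def length_scale_last)
  ultimately show ?thesis unfolding RNN_def
    by (intro CollectI exI[of _ "(W1, b1, scale_last c ls)"] conjI) auto
qed

lemma RNN_add:
  assumes L: "length Ns \<ge> 2" and cv: "fun_set_convex (RNN \<rho> \<Omega> Ns)"
    and f: "f \<in> RNN \<rho> \<Omega> Ns" and g: "g \<in> RNN \<rho> \<Omega> Ns"
  shows "(\<lambda>x i. f x i + g x i) \<in> RNN \<rho> \<Omega> Ns"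
proof -
  have h: "\<forall>t. 0 \<le> t \<and> t \<le> 1 \<longrightarrow> (\<lambda>x i. t * f x i + (1 - t) * g x i) \<in> RNN \<rho> \<Omega> Ns"
    using cv f g unfolding fun_set_convex_def by blast
  have "(\<lambda>x i. (1/2) * f x i + (1 - 1/2) * g x i) \<in> RNN \<rho> \<Omega> Ns"
    by (rule h[rule_format]) simp
  from RNN_scale[OF L this, of 2] show ?thesis by (simp add: algebra_simps)
qed

fun chain_eval :: "(real \<Rightarrow> real) \<Rightarrow> real \<Rightarrow> (real \<times> real) list \<Rightarrow> real" where
  "chain_eval \<rho> s [] = s"
| "chain_eval \<rho> s ((a, b) # hs) = chain_eval \<rho> (\<rho> (a * s + b)) hs"

definition hid :: "real \<times> real \<Rightarrow> layer" where
  "hid ab = (\<lambda>i j. if i = 0 \<and> j = 0 then fst ab else 0, \<lambda>i. if i = 0 then snd ab else 0)"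

definition outl :: layer where
  "outl = (\<lambda>i j. if i = 0 \<and> j = 0 then 1 else 0, \<lambda>_. 0)"

lemma sum_delta0:
  fixes n :: nat
  assumes "n \<ge> 1"
  shows "(\<Sum>j<n. (if j = 0 then a else 0) * v j) = a * (v 0 :: real)"
proof -
  have "(\<Sum>j<n. (if j = 0 then a else 0) * v j) = (\<Sum>j<n. if j = 0 then a * v j else 0)"
    by (rule sum.cong) auto
  also have "\<dots> = a * v 0" using assms by (simp add: sum.delta[OF finite_lessThan])
  finally show ?thesis .
qed

lemma chain_layers:
  "length ms = Suc (length hs) \<Longrightarrow> (\<forall>m\<in>set ms. m \<ge> 1) \<Longrightarrow> n \<ge> 1 \<Longrightarrow>
    layers_eval \<rho> n ms (map hid hs @ [outl]) v 0 = chain_eval \<rho> (v 0) hs"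
proof (induction hs arbitrary: n ms v)
  case Nil
  then obtain m where ms: "ms = [m]" by (cases ms) auto
  then have "m \<ge> 1" using Nil by simp
  have "affine_step n m outl v 0 = (\<Sum>j<n. (if j = 0 then 1 else 0) * v j)"
    using \<open>m \<ge> 1\<close> unfolding affine_step_def outl_def by simp
  also have "\<dots> = v 0" using sum_delta0[OF Nil.prems(3), of 1 v] by simp
  finally show ?case using ms by simp
next
  case (Cons ab hs)
  obtain a b where ab: "ab = (a, b)" by (cases ab)
  obtain m ms' where ms: "ms = m # ms'" using Cons.prems by (cases ms) auto
  obtain m2 ms'' where ms': "ms' = m2 # ms''" using Cons.prems ms by (cases ms') auto
  have m1: "m \<ge> 1" using Cons.prems ms by simp
  obtain l1 ls1 where r: "map hid hs @ [outl] = l1 # ls1" by (cases "map hid hs @ [outl]") auto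
  define v' where "v' = (\<lambda>i. if i < m then \<rho> (affine_step n m (hid ab) v i) else 0)"
  have "layers_eval \<rho> n ms (map hid (ab # hs) @ [outl]) v = layers_eval \<rho> m ms' (map hid hs @ [outl]) v'"
    using ms ms' r by (simp add: v'_def)
  moreover have "v' 0 = \<rho> (a * v 0 + b)"
  proof -
    have "affine_step n m (hid ab) v 0 = (\<Sum>j<n. (if j = 0 then a else 0) * v j) + b"
      using m1 unfolding affine_step_def hid_def ab fst_conv snd_conv by simp
    then show ?thesis using m1 sum_delta0[OF Cons.prems(3), of a v] by (simp add: v'_def)
  qed
  moreover have "layers_eval \<rho> m ms' (map hid hs @ [outl]) v' 0 = chain_eval \<rho> (v' 0) hs"
    using Cons.IH[of ms' m v'] Cons.prems ms m1 by simp
  ultimately show ?case by (simp add: ab)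
qed

definition chain_net :: "real ^ 'd \<Rightarrow> real \<Rightarrow> (real \<times> real) list \<Rightarrow> 'd::finite network" where
  "chain_net w0 b0 hs = (\<lambda>j. if j = 0 then fst (hd hs) *\<^sub>R w0 else 0,
     \<lambda>j. if j = 0 then fst (hd hs) * b0 + snd (hd hs) else 0, map hid (tl hs) @ [outl])"

lemma chain_net_ok:
  "length hs = length Ns - 1 \<Longrightarrow> length Ns \<ge> 2 \<Longrightarrow> is_network Ns (chain_net w0 b0 hs)"
  by (cases hs) (auto simp: is_network_def chain_net_def)

lemma chain_real:
  assumes L: "length Ns \<ge> 2" and pos: "\<forall>N\<in>set Ns. N \<ge> 1" and hs: "length hs = length Ns - 1"
    and x: "x \<in> \<Omega>"
  shows "realization \<rho> \<Omega> Ns (chain_net w0 b0 hs) x 0 = chain_eval \<rho> (w0 \<bullet> x + b0) hs"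
proof -
  obtain a1 b1 hs' where hs': "hs = (a1, b1) # hs'" using hs L by (cases hs) auto
  obtain N1 Ns' where Ns: "Ns = N1 # Ns'" using L by (cases Ns) auto
  have N1: "N1 \<ge> 1" using pos Ns by simp
  define x1 where "x1 = (\<lambda>j. if j < N1 then \<rho> ((if j = 0 then a1 *\<^sub>R w0 else 0) \<bullet> x + (if j = 0 then a1 * b0 + b1 else 0)) else 0)"
  have "realization \<rho> \<Omega> Ns (chain_net w0 b0 hs) x = layers_eval \<rho> N1 Ns' (map hid hs' @ [outl]) x1"
    using x unfolding realization_def chain_net_def hs' Ns x1_def list.sel fst_conv snd_conv by simp
  moreover have "layers_eval \<rho> N1 Ns' (map hid hs' @ [outl]) x1 0 = chain_eval \<rho> (x1 0) hs'"
    by (rule chain_layers) (use hs hs' Ns pos N1 in auto)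
  moreover have "x1 0 = \<rho> (a1 * (w0 \<bullet> x + b0) + b1)" using N1 by (simp add: x1_def algebra_simps)
  ultimately show ?thesis by (simp add: hs')
qed

lemma chain_eval_append: "chain_eval \<rho> s (hs @ [(a, b)]) = \<rho> (a * chain_eval \<rho> s hs + b)"
  by (induction \<rho> s hs rule: chain_eval.induct) auto

lemma chain_eval_fix: "\<rho> (a * y + b) = y \<Longrightarrow> chain_eval \<rho> y (replicate j (a, b)) = y"
  by (induction j) auto

lemma chain_eval_cont: "continuous_on UNIV \<rho> \<Longrightarrow> continuous_on UNIV (\<lambda>s. chain_eval \<rho> s hs)"
proof (induction hs)
  case Nil
  then show ?case by (simp add: continuous_on_id)
next
  case (Cons ab hs)
  obtain a b where ab: "ab = (a, b)" by (cases ab)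
  have "continuous_on UNIV (\<lambda>s. \<rho> (a * s + b))"
    by (rule continuous_on_compose2[OF Cons.prems]) (auto intro!: continuous_intros)
  then have "continuous_on UNIV (\<lambda>s. chain_eval \<rho> (\<rho> (a * s + b)) hs)"
    using continuous_on_compose2[OF Cons.IH[OF Cons.prems]] by blast
  then show ?case by (simp add: ab)
qed

lemma ll_interval:
  assumes "locally_lipschitz \<rho>"
  shows "\<exists>K. K-lipschitz_on {-X..X} \<rho>"
proof -
  have ll: "local_lipschitz {0::real} {-X..X} (\<lambda>_. \<rho>)"
    unfolding local_lipschitz_def
  proof (intro ballI)
    fix x t assume "x \<in> {-X..X}" "t \<in> {0::real}"
    obtain e K where "e > 0" "K-lipschitz_on (cball x e) \<rho>"
      using assms unfolding locally_lipschitz_def by blast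
    then show "\<exists>u>0. \<exists>L. \<forall>t\<in>cball t u \<inter> {0}. L-lipschitz_on (cball x u \<inter> {-X..X}) \<rho>"
      by (intro exI[of _ e] conjI exI[of _ K]) (auto intro: lipschitz_on_subset)
  qed
  obtain L where "\<And>t. t \<in> {0::real} \<Longrightarrow> L-lipschitz_on {-X..X} ((\<lambda>_. \<rho>) t)"
    by (rule local_lipschitz_compact_implies_lipschitz[OF ll]) auto
  then show ?thesis by auto
qed

lemma ll_cont:
  assumes "locally_lipschitz \<rho>"
  shows "continuous_on UNIV \<rho>"
proof -
  have "isCont \<rho> x" for x
  proof -
    obtain K where K: "K-lipschitz_on {-(\<bar>x\<bar>+1)..\<bar>x\<bar>+1} \<rho>" using ll_interval[OF assms] by blast
    have "continuous_on {-(\<bar>x\<bar>+1)..\<bar>x\<bar>+1} \<rho>" by (rule lipschitz_on_continuous_on[OF K])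
    moreover have "x \<in> interior {-(\<bar>x\<bar>+1)..\<bar>x\<bar>+1}" by auto
    ultimately show ?thesis using continuous_on_interior by blast
  qed
  then show ?thesis by (simp add: continuous_on_eq_continuous_at)
qed

lemma lip_bound:
  assumes "K-lipschitz_on {-X..X} \<rho>" "\<bar>y\<bar> \<le> X"
  shows "\<bar>\<rho> y\<bar> \<le> \<bar>\<rho> 0\<bar> + K * X"
proof -
  have X0: "X \<ge> 0" using assms(2) by linarith
  have "dist (\<rho> y) (\<rho> 0) \<le> K * dist y 0"
    by (rule lipschitz_onD[OF assms(1)]) (use assms(2) X0 in auto)
  moreover have "K * dist y 0 \<le> K * X"
    using assms(2) lipschitz_on_nonneg[OF assms(1)] by (simp add: dist_real_def mult_left_mono)
  ultimately show ?thesis by (simp add: dist_real_def)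
qed

lemma lip_diff:
  assumes "K-lipschitz_on {-X..X} \<rho>" "\<bar>y\<bar> \<le> X" "\<bar>y'\<bar> \<le> X"
  shows "\<bar>\<rho> y - \<rho> y'\<bar> \<le> K * \<bar>y - y'\<bar>"
  using lipschitz_onD[OF assms(1), of y y'] assms(2,3) by (auto simp: dist_real_def abs_le_iff)

definition lay_ok :: "real \<Rightarrow> real \<Rightarrow> nat \<Rightarrow> nat \<Rightarrow> layer \<Rightarrow> layer \<Rightarrow> bool" where
  "lay_ok R \<delta> n m l l' \<longleftrightarrow> (\<forall>i<m. (\<forall>j<n. \<bar>fst l i j\<bar> \<le> R \<and> \<bar>fst l' i j\<bar> \<le> R \<and> \<bar>fst l i j - fst l' i j\<bar> \<le> \<delta>)
      \<and> \<bar>snd l i\<bar> \<le> R \<and> \<bar>snd l' i\<bar> \<le> R \<and> \<bar>snd l i - snd l' i\<bar> \<le> \<delta>)"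

fun lays_ok :: "real \<Rightarrow> real \<Rightarrow> nat \<Rightarrow> nat list \<Rightarrow> layer list \<Rightarrow> layer list \<Rightarrow> bool" where
  "lays_ok R \<delta> n [] [] [] = True"
| "lays_ok R \<delta> n (m # ms) (l # ls) (l' # ls') = (lay_ok R \<delta> n m l l' \<and> lays_ok R \<delta> m ms ls ls')"
| "lays_ok R \<delta> n _ _ _ = False"

lemma lay_ok_mono: assumes "lay_ok R \<delta> n m l l'" "R \<le> R'" "\<delta> \<le> \<delta>'" shows "lay_ok R' \<delta>' n m l l'"
  unfolding lay_ok_def
proof (intro allI impI conjI)
  fix i j assume i: "i < m"
  have h: "(\<forall>j<n. \<bar>fst l i j\<bar> \<le> R \<and> \<bar>fst l' i j\<bar> \<le> R \<and> \<bar>fst l i j - fst l' i j\<bar> \<le> \<delta>)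
      \<and> \<bar>snd l i\<bar> \<le> R \<and> \<bar>snd l' i\<bar> \<le> R \<and> \<bar>snd l i - snd l' i\<bar> \<le> \<delta>"
    using assms(1) i unfolding lay_ok_def by blast
  show "\<bar>snd l i\<bar> \<le> R'" "\<bar>snd l' i\<bar> \<le> R'" "\<bar>snd l i - snd l' i\<bar> \<le> \<delta>'"
    using h assms(2,3) by linarith+
  assume j: "j < n"
  show "\<bar>fst l i j\<bar> \<le> R'" "\<bar>fst l' i j\<bar> \<le> R'" "\<bar>fst l i j - fst l' i j\<bar> \<le> \<delta>'"
    using h j assms(2,3) by (meson order_trans)+
qed

lemma lays_ok_mono: "lays_ok R \<delta> n ms ls ls' \<Longrightarrow> R \<le> R' \<Longrightarrow> \<delta> \<le> \<delta>' \<Longrightarrow> lays_ok R' \<delta>' n ms ls ls'"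
proof (induction R \<delta> n ms ls ls' rule: lays_ok.induct)
  case (2 R \<delta> n m ms l ls l' ls')
  then show ?case using lay_ok_mono[of R \<delta> n m l l' R' \<delta>'] by simp
qed auto
lemma lays_ok_Nil_E: "lays_ok R \<delta> n [] ls ls' \<Longrightarrow> ls = [] \<and> ls' = []"
  by (cases ls; cases ls') auto

lemma lays_ok_Cons_E: "lays_ok R \<delta> n (m # ms) ls ls' \<Longrightarrow>
  \<exists>l ls1 l' ls1'. ls = l # ls1 \<and> ls' = l' # ls1' \<and> lay_ok R \<delta> n m l l' \<and> lays_ok R \<delta> m ms ls1 ls1'"
  by (cases ls; cases ls') auto

lemma lays_ok_nth:
  "length ls = length ms \<Longrightarrow> length ls' = length ms \<Longrightarrow>
   (\<forall>l<length ms. lay_ok R \<delta> ((n # ms) ! l) (ms ! l) (ls ! l) (ls' ! l)) \<Longrightarrow> lays_ok R \<delta> n ms ls ls'"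
proof (induction ms arbitrary: n ls ls')
  case Nil
  then show ?case by simp
next
  case (Cons m ms)
  obtain l ls1 where ls: "ls = l # ls1" using Cons.prems by (cases ls) auto
  obtain l' ls1' where ls': "ls' = l' # ls1'" using Cons.prems by (cases ls') auto
  have "lay_ok R \<delta> n m l l'" using Cons.prems(3)[rule_format, of 0] ls ls' by simp
  moreover have "lays_ok R \<delta> m ms ls1 ls1'"
  proof (rule Cons.IH)
    show "length ls1 = length ms" "length ls1' = length ms" using Cons.prems ls ls' by auto
    show "\<forall>l<length ms. lay_ok R \<delta> ((m # ms) ! l) (ms ! l) (ls1 ! l) (ls1' ! l)"
    proof (intro allI impI)
      fix k assume "k < length ms"
      then show "lay_ok R \<delta> ((m # ms) ! k) (ms ! k) (ls1 ! k) (ls1' ! k)"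
        using Cons.prems(3)[rule_format, of "Suc k"] ls ls' by simp
    qed
  qed
  ultimately show ?case using ls ls' by simp
qed

lemma sum_abs_bound:
  fixes f :: "nat \<Rightarrow> real"
  assumes "\<And>j. j < n \<Longrightarrow> \<bar>f j\<bar> \<le> c"
  shows "\<bar>\<Sum>j<n. f j\<bar> \<le> real n * c"
proof -
  have "\<bar>\<Sum>j<n. f j\<bar> \<le> (\<Sum>j<n. \<bar>f j\<bar>)" by (rule sum_abs)
  also have "\<dots> \<le> (\<Sum>j<n. c)" by (rule sum_mono) (use assms in auto)
  finally show ?thesis by simp
qed

lemma prod_diff_bound:
  fixes a a' x x' R \<delta> :: real
  assumes "\<bar>a\<bar> \<le> R" "\<bar>a'\<bar> \<le> R" "\<bar>a - a'\<bar> \<le> \<delta>" "\<bar>x\<bar> \<le> R" "\<bar>x'\<bar> \<le> R" "\<bar>x - x'\<bar> \<le> \<delta>"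
  shows "\<bar>a * x - a' * x'\<bar> \<le> 2 * R * \<delta>"
proof -
  have e: "a * x - a' * x' = (a - a') * x + a' * (x - x')" by (simp add: algebra_simps)
  have "\<bar>a * x - a' * x'\<bar> \<le> \<bar>(a - a') * x\<bar> + \<bar>a' * (x - x')\<bar>"
    unfolding e by (rule abs_triangle_ineq)
  also have "\<dots> = \<bar>a - a'\<bar> * \<bar>x\<bar> + \<bar>a'\<bar> * \<bar>x - x'\<bar>" by (simp add: abs_mult)
  also have "\<dots> \<le> \<delta> * R + R * \<delta>"
  proof (rule add_mono)
    have "0 \<le> \<delta>" using assms(3) by linarith
    then show "\<bar>a - a'\<bar> * \<bar>x\<bar> \<le> \<delta> * R" by (rule mult_mono[OF assms(3) assms(4) _ abs_ge_zero])
    have "0 \<le> R" using assms(2) by linarith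
    then show "\<bar>a'\<bar> * \<bar>x - x'\<bar> \<le> R * \<delta>" by (rule mult_mono[OF assms(2) assms(6) _ abs_ge_zero])
  qed
  also have "\<dots> = 2 * R * \<delta>" by (simp add: algebra_simps)
  finally show ?thesis .
qed

lemma abs_mult_le: "\<bar>a\<bar> \<le> R \<Longrightarrow> \<bar>x\<bar> \<le> R \<Longrightarrow> \<bar>a * x\<bar> \<le> R * (R::real)"
  unfolding abs_mult by (rule mult_mono) auto

lemma affine_bounds:
  assumes lo: "lay_ok R \<delta> n m l l'" and R0: "R \<ge> 0" and d0: "\<delta> \<ge> 0"
    and v: "\<forall>j<n. \<bar>v j\<bar> \<le> R \<and> \<bar>v' j\<bar> \<le> R \<and> \<bar>v j - v' j\<bar> \<le> \<delta>"
  shows "\<bar>affine_step n m l v i\<bar> \<le> real n * R * R + R"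
    and "\<bar>affine_step n m l v i - affine_step n m l' v' i\<bar> \<le> (2 * real n * R + 1) * \<delta>"
proof -
  show "\<bar>affine_step n m l v i\<bar> \<le> real n * R * R + R"
  proof (cases "i < m")
    case True
    have li: "\<forall>j<n. \<bar>fst l i j\<bar> \<le> R \<and> \<bar>fst l' i j\<bar> \<le> R \<and> \<bar>fst l i j - fst l' i j\<bar> \<le> \<delta>"
      "\<bar>snd l i\<bar> \<le> R" using lo True unfolding lay_ok_def by blast+
    have s: "\<bar>\<Sum>j<n. fst l i j * v j\<bar> \<le> real n * (R * R)"
      by (rule sum_abs_bound, rule abs_mult_le) (use li v in blast)+
    have "affine_step n m l v i = (\<Sum>j<n. fst l i j * v j) + snd l i"
      using True by (simp add: affine_step_def)
    then have "\<bar>affine_step n m l v i\<bar> \<le> \<bar>\<Sum>j<n. fst l i j * v j\<bar> + \<bar>snd l i\<bar>"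
      by (simp add: abs_triangle_ineq)
    then show ?thesis using s li(2) by (simp add: mult.assoc)
  next
    case False then show ?thesis using R0 by (simp add: affine_step_def)
  qed
  show "\<bar>affine_step n m l v i - affine_step n m l' v' i\<bar> \<le> (2 * real n * R + 1) * \<delta>"
  proof (cases "i < m")
    case True
    have li: "\<forall>j<n. \<bar>fst l i j\<bar> \<le> R \<and> \<bar>fst l' i j\<bar> \<le> R \<and> \<bar>fst l i j - fst l' i j\<bar> \<le> \<delta>"
      "\<bar>snd l i - snd l' i\<bar> \<le> \<delta>" using lo True unfolding lay_ok_def by blast+
    have s: "\<bar>\<Sum>j<n. fst l i j * v j - fst l' i j * v' j\<bar> \<le> real n * (2 * R * \<delta>)"
    proof (rule sum_abs_bound)
      fix j assume "j < n"
      then show "\<bar>fst l i j * v j - fst l' i j * v' j\<bar> \<le> 2 * R * \<delta>"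
        using li(1) v by (intro prod_diff_bound) blast+
    qed
    have "affine_step n m l v i - affine_step n m l' v' i
        = (\<Sum>j<n. fst l i j * v j - fst l' i j * v' j) + (snd l i - snd l' i)"
      using True by (simp add: affine_step_def sum_subtractf)
    then have "\<bar>affine_step n m l v i - affine_step n m l' v' i\<bar>
        \<le> \<bar>\<Sum>j<n. fst l i j * v j - fst l' i j * v' j\<bar> + \<bar>snd l i - snd l' i\<bar>"
      by (simp add: abs_triangle_ineq)
    then show ?thesis using s li(2) by (simp add: algebra_simps)
  next
    case False
    then show ?thesis using R0 d0 by (simp add: affine_step_def)
  qed
qed

lemma layers_lip:
  assumes rl: "\<forall>X. \<exists>K. K-lipschitz_on {-X..X} \<rho>"
  shows "R \<ge> 0 \<Longrightarrow> \<exists>K\<ge>0. \<forall>ls ls' v v' \<delta>. \<delta> \<ge> 0 \<longrightarrow> lays_ok R \<delta> n ms ls ls' \<longrightarrow>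
      (\<forall>j<n. \<bar>v j\<bar> \<le> R \<and> \<bar>v' j\<bar> \<le> R \<and> \<bar>v j - v' j\<bar> \<le> \<delta>) \<longrightarrow>
      (\<forall>i. \<bar>layers_eval \<rho> n ms ls v i - layers_eval \<rho> n ms ls' v' i\<bar> \<le> K * \<delta>)"
proof (induction ms arbitrary: n R)
  case Nil
  show ?case
  proof (intro exI[of _ 0] conjI allI impI)
    fix ls ls' :: "layer list" and v v' :: "nat \<Rightarrow> real" and \<delta> :: real and i
    assume "lays_ok R \<delta> n [] ls ls'" "\<delta> \<ge> 0"
    then have "ls = []" "ls' = []" using lays_ok_Nil_E by blast+
    then show "\<bar>layers_eval \<rho> n [] ls v i - layers_eval \<rho> n [] ls' v' i\<bar> \<le> 0 * \<delta>" by simp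
  qed simp
next
  case (Cons m ms)
  show ?case
  proof (cases ms)
    case Nil
    show ?thesis
    proof (intro exI[of _ "2 * real n * R + 1"] conjI allI impI)
      show "0 \<le> 2 * real n * R + 1" using Cons.prems by simp
      fix ls ls' :: "layer list" and v v' :: "nat \<Rightarrow> real" and \<delta> :: real and i
      assume d0: "\<delta> \<ge> 0" and lo: "lays_ok R \<delta> n (m # ms) ls ls'"
        and v: "\<forall>j<n. \<bar>v j\<bar> \<le> R \<and> \<bar>v' j\<bar> \<le> R \<and> \<bar>v j - v' j\<bar> \<le> \<delta>"
      obtain l l' where ls: "ls = [l]" "ls' = [l']" "lay_ok R \<delta> n m l l'"
        using lays_ok_Cons_E[OF lo] lays_ok_Nil_E Nil by blast
      show "\<bar>layers_eval \<rho> n (m # ms) ls v i - layers_eval \<rho> n (m # ms) ls' v' i\<bar> \<le> (2 * real n * R + 1) * \<delta>"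
        using affine_bounds(2)[OF ls(3) Cons.prems d0 v] ls Nil by simp
    qed
  next
    case (Cons m2 ms2)
    define X where "X = real n * R * R + R"
    obtain K\<rho> where K\<rho>: "K\<rho>-lipschitz_on {-X..X} \<rho>" using rl by blast
    have K\<rho>0: "K\<rho> \<ge> 0" using lipschitz_on_nonneg[OF K\<rho>] .
    define R2 where "R2 = max R (\<bar>\<rho> 0\<bar> + K\<rho> * X)"
    have R20: "R2 \<ge> 0" using \<open>R \<ge> 0\<close> by (simp add: R2_def)
    obtain K' where K': "K' \<ge> 0" "\<forall>ls ls' v v' \<delta>. \<delta> \<ge> 0 \<longrightarrow> lays_ok R2 \<delta> m ms ls ls' \<longrightarrow>
      (\<forall>j<m. \<bar>v j\<bar> \<le> R2 \<and> \<bar>v' j\<bar> \<le> R2 \<and> \<bar>v j - v' j\<bar> \<le> \<delta>) \<longrightarrow>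
      (\<forall>i. \<bar>layers_eval \<rho> m ms ls v i - layers_eval \<rho> m ms ls' v' i\<bar> \<le> K' * \<delta>)"
      using Cons.IH[OF R20] by blast
    define c where "c = max 1 (K\<rho> * (2 * real n * R + 1))"
    have c1: "c \<ge> 1" by (simp add: c_def)
    show ?thesis
    proof (intro exI[of _ "K' * c"] conjI allI impI)
      show "0 \<le> K' * c" using K'(1) c1 by simp
      fix ls ls' :: "layer list" and v v' :: "nat \<Rightarrow> real" and \<delta> :: real and i
      assume d0: "\<delta> \<ge> 0" and lo: "lays_ok R \<delta> n (m # ms) ls ls'"
        and v: "\<forall>j<n. \<bar>v j\<bar> \<le> R \<and> \<bar>v' j\<bar> \<le> R \<and> \<bar>v j - v' j\<bar> \<le> \<delta>"
      obtain l l' ls1 ls1' where ls0: "ls = l # ls1" "ls' = l' # ls1'"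
        and lo1: "lay_ok R \<delta> n m l l'" and lo2a: "lays_ok R \<delta> m ms ls1 ls1'"
        using lays_ok_Cons_E[OF lo] by blast
      obtain l2 l2' ls2 ls2' where ls1: "ls1 = l2 # ls2" "ls1' = l2' # ls2'"
        using lays_ok_Cons_E[of R \<delta> m m2 ms2 ls1 ls1'] lo2a Cons by blast
      have ls: "ls = l # l2 # ls2" "ls' = l' # l2' # ls2'" using ls0 ls1 by auto
      have lo2: "lays_ok R \<delta> m ms (l2 # ls2) (l2' # ls2')" using lo2a ls1 by simp
      define h where "h = (\<lambda>i. if i < m then \<rho> (affine_step n m l v i) else 0)"
      define h' where "h' = (\<lambda>i. if i < m then \<rho> (affine_step n m l' v' i) else 0)"
      have ev: "layers_eval \<rho> n (m # ms) ls v = layers_eval \<rho> m ms (l2 # ls2) h"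
        "layers_eval \<rho> n (m # ms) ls' v' = layers_eval \<rho> m ms (l2' # ls2') h'"
        using ls Cons by (simp_all add: h_def h'_def)
      have lo1': "lay_ok R \<delta> n m l' l" using lo1 by (auto simp: lay_ok_def abs_minus_commute)
      have v': "\<forall>j<n. \<bar>v' j\<bar> \<le> R \<and> \<bar>v j\<bar> \<le> R \<and> \<bar>v' j - v j\<bar> \<le> \<delta>" using v by (auto simp: abs_minus_commute)
      have hb: "\<forall>j<m. \<bar>h j\<bar> \<le> R2 \<and> \<bar>h' j\<bar> \<le> R2 \<and> \<bar>h j - h' j\<bar> \<le> c * \<delta>"
      proof (intro allI impI)
        fix j assume j: "j < m"
        have a1: "\<bar>affine_step n m l v j\<bar> \<le> X" using affine_bounds(1)[OF lo1 Cons.prems d0 v] by (simp add: X_def)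
        have a2: "\<bar>affine_step n m l' v' j\<bar> \<le> X" using affine_bounds(1)[OF lo1' Cons.prems d0 v'] by (simp add: X_def)
        have a3: "\<bar>affine_step n m l v j - affine_step n m l' v' j\<bar> \<le> (2 * real n * R + 1) * \<delta>"
          using affine_bounds(2)[OF lo1 Cons.prems d0 v] .
        have "\<bar>h j\<bar> \<le> R2" using lip_bound[OF K\<rho> a1] j by (simp add: h_def R2_def)
        moreover have "\<bar>h' j\<bar> \<le> R2" using lip_bound[OF K\<rho> a2] j by (simp add: h'_def R2_def)
        moreover have "\<bar>h j - h' j\<bar> \<le> c * \<delta>"
        proof -
          have "\<bar>h j - h' j\<bar> \<le> K\<rho> * \<bar>affine_step n m l v j - affine_step n m l' v' j\<bar>"
            using lip_diff[OF K\<rho> a1 a2] j by (simp add: h_def h'_def)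
          also have "\<dots> \<le> K\<rho> * ((2 * real n * R + 1) * \<delta>)" by (rule mult_left_mono[OF a3 K\<rho>0])
          also have "\<dots> \<le> c * \<delta>"
          proof -
            have e: "K\<rho> * ((2 * real n * R + 1) * \<delta>) = (K\<rho> * (2 * real n * R + 1)) * \<delta>"
              by (simp only: mult.assoc)
            have "(K\<rho> * (2 * real n * R + 1)) * \<delta> \<le> c * \<delta>"
              unfolding c_def by (rule mult_right_mono[OF max.cobounded2 d0])
            then show ?thesis using e by linarith
          qed
          finally show ?thesis .
        qed
        ultimately show "\<bar>h j\<bar> \<le> R2 \<and> \<bar>h' j\<bar> \<le> R2 \<and> \<bar>h j - h' j\<bar> \<le> c * \<delta>" by blast
      qed
      have lo2': "lays_ok R2 (c * \<delta>) m ms (l2 # ls2) (l2' # ls2')"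
        by (rule lays_ok_mono[OF lo2]) (use c1 d0 in \<open>auto simp: R2_def intro: order_trans[of _ "1 * \<delta>"] mult_right_mono\<close>)
      have "\<bar>layers_eval \<rho> m ms (l2 # ls2) h i - layers_eval \<rho> m ms (l2' # ls2') h' i\<bar> \<le> K' * (c * \<delta>)"
      proof -
        have cd0: "0 \<le> c * \<delta>" using c1 d0 by simp
        have "\<forall>i. \<bar>layers_eval \<rho> m ms (l2 # ls2) h i - layers_eval \<rho> m ms (l2' # ls2') h' i\<bar> \<le> K' * (c * \<delta>)"
          using K'(2) lo2' hb cd0 by blast
        then show ?thesis by blast
      qed
      then show "\<bar>layers_eval \<rho> n (m # ms) ls v i - layers_eval \<rho> n (m # ms) ls' v' i\<bar> \<le> K' * c * \<delta>"
        using ev by (simp add: mult.assoc)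
    qed
  qed
qed

datatype 'd pidx = IW nat 'd | IB nat | IA nat nat nat | IC nat nat

definition Idx :: "nat list \<Rightarrow> 'd pidx set" where
  "Idx Ns = (\<lambda>(j, a). IW j a) ` ({..<hd Ns} \<times> UNIV) \<union> IB ` {..<hd Ns}
    \<union> (\<lambda>(l, i, j). IA l i j) ` {(l, i, j). l < length Ns - 1 \<and> i < Ns ! Suc l \<and> j < Ns ! l}
    \<union> (\<lambda>(l, i). IC l i) ` {(l, i). l < length Ns - 1 \<and> i < Ns ! Suc l}"

lemma finite_Idx: "finite (Idx Ns :: 'd::finite pidx set)"
proof -
  define M where "M = Suc (sum_list Ns + length Ns)"
  have b: "Ns ! l < M" if "l < length Ns" for l
    using elem_le_sum_list[OF that] unfolding M_def by simp
  have lM: "length Ns < M" unfolding M_def by simp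
  have s1: "{(l, i, j). l < length Ns - 1 \<and> i < Ns ! Suc l \<and> j < Ns ! l} \<subseteq> {..<M} \<times> {..<M} \<times> {..<M}"
  proof -
    have "(l, i, j) \<in> {..<M} \<times> {..<M} \<times> {..<M}"
      if h: "l < length Ns - 1" "i < Ns ! Suc l" "j < Ns ! l" for l i j
    proof -
      have "Suc l < length Ns" "l < length Ns" using h by auto
      then have "Ns ! Suc l < M" "Ns ! l < M" using b by blast+
      then show ?thesis using h lM by auto
    qed
    then show ?thesis by auto
  qed
  have s2: "{(l, i). l < length Ns - 1 \<and> i < Ns ! Suc l} \<subseteq> {..<M} \<times> {..<M}"
  proof -
    have "(l, i) \<in> {..<M} \<times> {..<M}" if h: "l < length Ns - 1" "i < Ns ! Suc l" for l i
    proof -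
      have "Suc l < length Ns" using h by auto
      then have "Ns ! Suc l < M" using b by blast
      then show ?thesis using h lM by auto
    qed
    then show ?thesis by auto
  qed
  show ?thesis unfolding Idx_def
    using finite_subset[OF s1] finite_subset[OF s2] by auto
qed

lemma Idx_IW: "j < hd Ns \<Longrightarrow> IW j a \<in> Idx Ns"
  unfolding Idx_def by (rule UnI1, rule UnI1, rule UnI1, rule image_eqI[where x="(j, a)"]) auto

lemma Idx_IB: "j < hd Ns \<Longrightarrow> IB j \<in> Idx Ns"
  unfolding Idx_def by (rule UnI1, rule UnI1, rule UnI2) auto

lemma Idx_IA: "l < length Ns - 1 \<Longrightarrow> i < Ns ! Suc l \<Longrightarrow> j < Ns ! l \<Longrightarrow> IA l i j \<in> Idx Ns"
  unfolding Idx_def by (rule UnI1, rule UnI2, rule image_eqI[where x="(l, i, j)"]) auto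

lemma Idx_IC: "l < length Ns - 1 \<Longrightarrow> i < Ns ! Suc l \<Longrightarrow> IC l i \<in> Idx Ns"
  unfolding Idx_def by (rule UnI2, rule image_eqI[where x="(l, i)"]) auto

definition dec :: "nat list \<Rightarrow> ('d pidx \<Rightarrow> real) \<Rightarrow> 'd::finite network" where
  "dec Ns \<phi> = (\<lambda>j. \<chi> a. \<phi> (IW j a), \<lambda>j. \<phi> (IB j),
     map (\<lambda>l. (\<lambda>i j. \<phi> (IA l i j), \<lambda>i. \<phi> (IC l i))) [0..<length Ns - 1])"

definition enc :: "'d::finite network \<Rightarrow> ('d pidx \<Rightarrow> real)" where
  "enc \<theta> = (\<lambda>\<iota>. case \<iota> of IW j a \<Rightarrow> fst \<theta> j $ a | IB j \<Rightarrow> fst (snd \<theta>) j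
     | IA l i j \<Rightarrow> fst (snd (snd \<theta>) ! l) i j | IC l i \<Rightarrow> snd (snd (snd \<theta>) ! l) i)"

lemma dec_enc: "is_network Ns \<theta> \<Longrightarrow> dec Ns (enc \<theta>) = \<theta>"
proof -
  assume net: "is_network Ns \<theta>"
  obtain W1 b1 ls where th: "\<theta> = (W1, b1, ls)" by (cases \<theta>) auto
  have len: "length ls = length Ns - 1" using net th by (simp add: is_network_def)
  have "map (\<lambda>l. (\<lambda>i j. fst (ls ! l) i j, \<lambda>i. snd (ls ! l) i)) [0..<length ls] = ls"
    by (rule nth_equalityI) auto
  then show ?thesis unfolding th dec_def enc_def using len by (simp add: vec_lambda_eta)
qed

lemma inner_bound:
  fixes w x :: "real ^ 'd::finite"
  assumes "\<And>a. \<bar>w $ a\<bar> \<le> B"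
  shows "\<bar>w \<bullet> x\<bar> \<le> B * (\<Sum>a\<in>UNIV. \<bar>x $ a\<bar>)"
proof -
  have "\<bar>w \<bullet> x\<bar> = \<bar>\<Sum>a\<in>UNIV. w $ a * x $ a\<bar>" by (simp add: inner_vec_def)
  also have "\<dots> \<le> (\<Sum>a\<in>UNIV. \<bar>w $ a\<bar> * \<bar>x $ a\<bar>)" by (rule sum_abs[THEN order_trans]) (simp add: abs_mult)
  also have "\<dots> \<le> (\<Sum>a\<in>UNIV. B * \<bar>x $ a\<bar>)" by (rule sum_mono) (use assms in \<open>auto intro: mult_right_mono\<close>)
  finally show ?thesis by (simp add: sum_distrib_left)
qed

lemma real_lip:
  fixes \<Omega> :: "(real ^ 'd::finite) set" and x :: "real ^ 'd"
  assumes rl: "\<forall>X. \<exists>K. K-lipschitz_on {-X..X} \<rho>" and L: "length Ns \<ge> 2" and R0: "R \<ge> 0"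
  shows "\<exists>K\<ge>0. \<forall>\<phi> \<phi>' \<delta>. \<delta> \<ge> 0 \<longrightarrow> (\<forall>\<iota>\<in>Idx Ns. \<bar>\<phi> \<iota>\<bar> \<le> R \<and> \<bar>\<phi>' \<iota>\<bar> \<le> R \<and> \<bar>\<phi> \<iota> - \<phi>' \<iota>\<bar> \<le> \<delta>) \<longrightarrow>
      \<bar>realization \<rho> \<Omega> Ns (dec Ns \<phi>) x i - realization \<rho> \<Omega> Ns (dec Ns \<phi>') x i\<bar> \<le> K * \<delta>"
proof -
  obtain N1 ms where Ns: "Ns = N1 # ms" using L by (cases Ns) auto
  define S where "S = (\<Sum>a\<in>UNIV. \<bar>x $ a\<bar>)"
  have S0: "S \<ge> 0" unfolding S_def by (simp add: sum_nonneg)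
  define X where "X = R * S + R"
  obtain K\<rho> where K\<rho>: "K\<rho>-lipschitz_on {-X..X} \<rho>" using rl by blast
  have K\<rho>0: "K\<rho> \<ge> 0" using lipschitz_on_nonneg[OF K\<rho>] .
  define R1 where "R1 = max R (\<bar>\<rho> 0\<bar> + K\<rho> * X)"
  have R10: "R1 \<ge> 0" using R0 by (simp add: R1_def)
  obtain K' where K': "K' \<ge> 0" "\<forall>ls ls' v v' \<delta>. \<delta> \<ge> 0 \<longrightarrow> lays_ok R1 \<delta> N1 ms ls ls' \<longrightarrow>
      (\<forall>j<N1. \<bar>v j\<bar> \<le> R1 \<and> \<bar>v' j\<bar> \<le> R1 \<and> \<bar>v j - v' j\<bar> \<le> \<delta>) \<longrightarrow>
      (\<forall>i. \<bar>layers_eval \<rho> N1 ms ls v i - layers_eval \<rho> N1 ms ls' v' i\<bar> \<le> K' * \<delta>)"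
    using layers_lip[OF rl R10] by blast
  define c where "c = max 1 (K\<rho> * (S + 1))"
  have c1: "c \<ge> 1" by (simp add: c_def)
  show ?thesis
  proof (intro exI[of _ "K' * c"] conjI allI impI)
    show "0 \<le> K' * c" using K'(1) c1 by simp
    fix \<phi> \<phi>' :: "'d pidx \<Rightarrow> real" and \<delta> :: real
    assume d0: "\<delta> \<ge> 0" and b: "\<forall>\<iota>\<in>Idx Ns. \<bar>\<phi> \<iota>\<bar> \<le> R \<and> \<bar>\<phi>' \<iota>\<bar> \<le> R \<and> \<bar>\<phi> \<iota> - \<phi>' \<iota>\<bar> \<le> \<delta>"
    show "\<bar>realization \<rho> \<Omega> Ns (dec Ns \<phi>) x i - realization \<rho> \<Omega> Ns (dec Ns \<phi>') x i\<bar> \<le> K' * c * \<delta>"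
    proof (cases "x \<in> \<Omega>")
      case False
      then show ?thesis using K'(1) c1 d0 by (simp add: realization_def)
    next
      case True
      define F where "F \<psi> = map (\<lambda>l. (\<lambda>i j. \<psi> (IA l i j), \<lambda>i. \<psi> (IC l i))) [0..<length Ns - 1]" for \<psi> :: "'d pidx \<Rightarrow> real"
      define h where "h \<psi> = (\<lambda>j. if j < N1 then \<rho> ((\<chi> a. \<psi> (IW j a)) \<bullet> x + \<psi> (IB j)) else 0)" for \<psi> :: "'d pidx \<Rightarrow> real"
      have ev: "realization \<rho> \<Omega> Ns (dec Ns \<psi>) x = layers_eval \<rho> N1 ms (F \<psi>) (h \<psi>)" for \<psi>
        using True unfolding realization_def dec_def F_def h_def Ns by simp
      have hb: "\<forall>j<N1. \<bar>h \<phi> j\<bar> \<le> R1 \<and> \<bar>h \<phi>' j\<bar> \<le> R1 \<and> \<bar>h \<phi> j - h \<phi>' j\<bar> \<le> c * \<delta>"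
      proof (intro allI impI)
        fix j assume j: "j < N1"
        have inW: "IW j (a::'d) \<in> Idx Ns" for a using j Ns by (intro Idx_IW) simp
        have inB: "IB j \<in> (Idx Ns :: 'd pidx set)" using j Ns by (intro Idx_IB) simp
        let ?p = "(\<chi> a. \<phi> (IW j a)) \<bullet> x + \<phi> (IB j)"
        let ?p' = "(\<chi> a. \<phi>' (IW j a)) \<bullet> x + \<phi>' (IB j)"
        have p1: "\<bar>?p\<bar> \<le> X"
        proof -
          have "\<bar>(\<chi> a. \<phi> (IW j a)) \<bullet> x\<bar> \<le> R * S" unfolding S_def by (rule inner_bound) (use b inW in simp)
          then show ?thesis using b inB unfolding X_def by (smt (verit))
        qed
        have p2: "\<bar>?p'\<bar> \<le> X"
        proof -
          have "\<bar>(\<chi> a. \<phi>' (IW j a)) \<bullet> x\<bar> \<le> R * S" unfolding S_def by (rule inner_bound) (use b inW in simp)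
          then show ?thesis using b inB unfolding X_def by (smt (verit))
        qed
        have p3: "\<bar>?p - ?p'\<bar> \<le> (S + 1) * \<delta>"
        proof -
          have e: "?p - ?p' = (\<chi> a. \<phi> (IW j a) - \<phi>' (IW j a)) \<bullet> x + (\<phi> (IB j) - \<phi>' (IB j))"
          proof -
            have "(\<chi> a. \<phi> (IW j a) - \<phi>' (IW j a)) = (\<chi> a. \<phi> (IW j a)) - (\<chi> a. \<phi>' (IW j a))"
              by (simp add: vec_eq_iff)
            then show ?thesis by (simp add: inner_diff_left)
          qed
          have "\<bar>(\<chi> a. \<phi> (IW j a) - \<phi>' (IW j a)) \<bullet> x\<bar> \<le> \<delta> * S" unfolding S_def
            by (rule inner_bound) (use b inW in simp)
          then show ?thesis unfolding e using b inB by (simp add: algebra_simps) (smt (verit))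
        qed
        have "\<bar>h \<phi> j\<bar> \<le> R1" using lip_bound[OF K\<rho> p1] j by (simp add: h_def R1_def)
        moreover have "\<bar>h \<phi>' j\<bar> \<le> R1" using lip_bound[OF K\<rho> p2] j by (simp add: h_def R1_def)
        moreover have "\<bar>h \<phi> j - h \<phi>' j\<bar> \<le> c * \<delta>"
        proof -
          have "\<bar>h \<phi> j - h \<phi>' j\<bar> \<le> K\<rho> * \<bar>?p - ?p'\<bar>" using lip_diff[OF K\<rho> p1 p2] j by (simp add: h_def)
          also have "\<dots> \<le> K\<rho> * ((S + 1) * \<delta>)" by (rule mult_left_mono[OF p3 K\<rho>0])
          also have "\<dots> \<le> c * \<delta>"
          proof -
            have e: "K\<rho> * ((S + 1) * \<delta>) = (K\<rho> * (S + 1)) * \<delta>" by (simp only: mult.assoc)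
            have "(K\<rho> * (S + 1)) * \<delta> \<le> c * \<delta>" unfolding c_def by (rule mult_right_mono[OF max.cobounded2 d0])
            then show ?thesis using e by linarith
          qed
          finally show ?thesis .
        qed
        ultimately show "\<bar>h \<phi> j\<bar> \<le> R1 \<and> \<bar>h \<phi>' j\<bar> \<le> R1 \<and> \<bar>h \<phi> j - h \<phi>' j\<bar> \<le> c * \<delta>" by blast
      qed
      have lo: "lays_ok R \<delta> N1 ms (F \<phi>) (F \<phi>')"
      proof (rule lays_ok_nth)
        show "length (F \<phi>) = length ms" "length (F \<phi>') = length ms" by (simp_all add: F_def Ns)
        show "\<forall>l<length ms. lay_ok R \<delta> ((N1 # ms) ! l) (ms ! l) (F \<phi> ! l) (F \<phi>' ! l)"
        proof (intro allI impI)
          fix l assume l: "l < length ms"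
          have inA: "IA l i j' \<in> (Idx Ns :: 'd pidx set)" if "i < ms ! l" "j' < (N1 # ms) ! l" for i j'
            using l that by (intro Idx_IA) (auto simp: Ns)
          have inC: "IC l i \<in> (Idx Ns :: 'd pidx set)" if "i < ms ! l" for i
            using l that by (intro Idx_IC) (auto simp: Ns)
          show "lay_ok R \<delta> ((N1 # ms) ! l) (ms ! l) (F \<phi> ! l) (F \<phi>' ! l)"
            unfolding lay_ok_def F_def using l b inA inC by (simp add: Ns)
        qed
      qed
      have lo': "lays_ok R1 (c * \<delta>) N1 ms (F \<phi>) (F \<phi>')"
      proof (rule lays_ok_mono[OF lo])
        show "R \<le> R1" by (simp add: R1_def)
        show "\<delta> \<le> c * \<delta>" using c1 d0 by (simp add: mult_le_cancel_right1)
      qed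
      have cd0: "0 \<le> c * \<delta>" using c1 d0 by simp
      have "\<forall>i. \<bar>layers_eval \<rho> N1 ms (F \<phi>) (h \<phi>) i - layers_eval \<rho> N1 ms (F \<phi>') (h \<phi>') i\<bar> \<le> K' * (c * \<delta>)"
        using K'(2) lo' hb cd0 by blast
      then show ?thesis unfolding ev by (simp add: mult.assoc)
    qed
  qed
qed

lemma bound_ineq:
  fixes k r P :: nat and K :: real
  assumes k: "k \<ge> 1" and K: "K \<ge> 0"
  shows "real (2 * (r + 1) * k + 1) ^ P * (2 * (K / real k)) ^ Suc P \<le> (3 * (real r + 1)) ^ P * (2 * K) ^ Suc P / real k"
proof -
  have k0: "real k > 0" using k by simp
  have "real (2 * (r + 1) * k + 1) \<le> 3 * (real r + 1) * real k"
  proof -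
    have "1 * 1 \<le> (real r + 1) * real k" by (rule mult_mono) (use k in auto)
    moreover have "real (2 * (r + 1) * k + 1) = 2 * (real r * real k) + 2 * real k + 1" by (simp add: algebra_simps)
    moreover have "3 * (real r + 1) * real k = 3 * (real r * real k) + 3 * real k" by (simp add: algebra_simps)
    moreover have "(real r + 1) * real k = real r * real k + real k" by (simp add: algebra_simps)
    ultimately show ?thesis by linarith
  qed
  then have "real (2 * (r + 1) * k + 1) ^ P \<le> (3 * (real r + 1) * real k) ^ P"
    by (rule power_mono) simp
  then have "real (2 * (r + 1) * k + 1) ^ P * (2 * (K / real k)) ^ Suc P
      \<le> (3 * (real r + 1) * real k) ^ P * (2 * (K / real k)) ^ Suc P"
    by (rule mult_right_mono) (use K k0 in simp)
  also have "\<dots> = (3 * (real r + 1)) ^ P * (2 * K) ^ Suc P / real k"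
  proof -
    have e1: "(3 * (real r + 1) * real k) ^ P = (3 * (real r + 1)) ^ P * real k ^ P" by (simp add: power_mult_distrib)
    have e2: "(2 * (K / real k)) ^ Suc P = (2 * K) ^ Suc P / real k ^ Suc P" by (simp add: power_divide)
    have e3: "real k ^ P / real k ^ Suc P = 1 / real k" using k0 by simp
    have "(3 * (real r + 1) * real k) ^ P * (2 * (K / real k)) ^ Suc P
        = ((3 * (real r + 1)) ^ P * (2 * K) ^ Suc P) * (real k ^ P / real k ^ Suc P)"
      unfolding e1 e2 by simp
    then show ?thesis unfolding e3 by simp
  qed
  finally show ?thesis .
qed

lemma no_surj:
  fixes \<Omega> :: "(real ^ 'd::finite) set" and xs :: "nat \<Rightarrow> real ^ 'd"
  assumes rl: "\<forall>X. \<exists>K. K-lipschitz_on {-X..X} \<rho>" and L: "length Ns \<ge> 2"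
    and n: "n = Suc (card (Idx Ns :: 'd pidx set))"
    and surj: "\<forall>y. \<exists>\<theta>. is_network Ns \<theta> \<and> (\<forall>k<n. realization \<rho> \<Omega> Ns \<theta> (xs k) 0 = y k)"
  shows False
proof -
  define P where "P = card (Idx Ns :: 'd pidx set)"
  have finI: "finite (Idx Ns :: 'd pidx set)" by (rule finite_Idx)
  define E where "E \<phi> = (\<lambda>k. realization \<rho> \<Omega> Ns (dec Ns \<phi>) (xs k) 0)" for \<phi> :: "'d pidx \<Rightarrow> real"
  have lipE: "\<exists>K\<ge>0. \<forall>\<phi> \<phi>' \<delta>. \<delta> \<ge> 0 \<longrightarrow> (\<forall>\<iota>\<in>Idx Ns. \<bar>\<phi> \<iota>\<bar> \<le> R \<and> \<bar>\<phi>' \<iota>\<bar> \<le> R \<and> \<bar>\<phi> \<iota> - \<phi>' \<iota>\<bar> \<le> \<delta>) \<longrightarrow>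
      (\<forall>k<n. \<bar>E \<phi> k - E \<phi>' k\<bar> \<le> K * \<delta>)" if R0: "R \<ge> 0" for R
  proof -
    have "\<forall>k. \<exists>K. K \<ge> 0 \<and> (\<forall>\<phi> \<phi>' \<delta>. \<delta> \<ge> 0 \<longrightarrow> (\<forall>\<iota>\<in>Idx Ns. \<bar>\<phi> \<iota>\<bar> \<le> R \<and> \<bar>\<phi>' \<iota>\<bar> \<le> R \<and> \<bar>\<phi> \<iota> - \<phi>' \<iota>\<bar> \<le> \<delta>) \<longrightarrow>
      \<bar>E \<phi> k - E \<phi>' k\<bar> \<le> K * \<delta>)"
      unfolding E_def using real_lip[OF rl L R0] by blast
    then obtain Kk where Kk: "\<forall>k. Kk k \<ge> 0 \<and> (\<forall>\<phi> \<phi>' \<delta>. \<delta> \<ge> 0 \<longrightarrow> (\<forall>\<iota>\<in>Idx Ns. \<bar>\<phi> \<iota>\<bar> \<le> R \<and> \<bar>\<phi>' \<iota>\<bar> \<le> R \<and> \<bar>\<phi> \<iota> - \<phi>' \<iota>\<bar> \<le> \<delta>) \<longrightarrow>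
      \<bar>E \<phi> k - E \<phi>' k\<bar> \<le> Kk k * \<delta>)"
      using choice[of "\<lambda>k K. K \<ge> 0 \<and> (\<forall>\<phi> \<phi>' \<delta>. \<delta> \<ge> 0 \<longrightarrow> (\<forall>\<iota>\<in>Idx Ns. \<bar>\<phi> \<iota>\<bar> \<le> R \<and> \<bar>\<phi>' \<iota>\<bar> \<le> R \<and> \<bar>\<phi> \<iota> - \<phi>' \<iota>\<bar> \<le> \<delta>) \<longrightarrow>
      \<bar>E \<phi> k - E \<phi>' k\<bar> \<le> K * \<delta>)"] by blast
    define K where "K = (\<Sum>k<n. Kk k)"
    have K0: "K \<ge> 0" unfolding K_def using Kk by (simp add: sum_nonneg)
    have Kle: "Kk k \<le> K" if "k < n" for k
      unfolding K_def by (rule member_le_sum) (use Kk that in auto)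
    show ?thesis
    proof (intro exI[of _ K] conjI allI impI)
      show "0 \<le> K" by (rule K0)
      fix \<phi> \<phi>' :: "'d pidx \<Rightarrow> real" and \<delta> :: real and k
      assume d0: "\<delta> \<ge> 0" and b: "\<forall>\<iota>\<in>Idx Ns. \<bar>\<phi> \<iota>\<bar> \<le> R \<and> \<bar>\<phi>' \<iota>\<bar> \<le> R \<and> \<bar>\<phi> \<iota> - \<phi>' \<iota>\<bar> \<le> \<delta>" and k: "k < n"
      have "\<bar>E \<phi> k - E \<phi>' k\<bar> \<le> Kk k * \<delta>" using Kk d0 b by blast
      also have "\<dots> \<le> K * \<delta>" by (rule mult_right_mono[OF Kle[OF k] d0])
      finally show "\<bar>E \<phi> k - E \<phi>' k\<bar> \<le> K * \<delta>" .
    qed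
  qed
  have "\<forall>r::nat. \<exists>K. K \<ge> 0 \<and> (\<forall>\<phi> \<phi>' \<delta>. \<delta> \<ge> 0 \<longrightarrow> (\<forall>\<iota>\<in>Idx Ns. \<bar>\<phi> \<iota>\<bar> \<le> real r + 1 \<and> \<bar>\<phi>' \<iota>\<bar> \<le> real r + 1 \<and> \<bar>\<phi> \<iota> - \<phi>' \<iota>\<bar> \<le> \<delta>) \<longrightarrow>
      (\<forall>k<n. \<bar>E \<phi> k - E \<phi>' k\<bar> \<le> K * \<delta>))"
    using lipE by (metis add_nonneg_nonneg of_nat_0_le_iff zero_le_one)
  then obtain Kf where Kf: "\<forall>r::nat. Kf r \<ge> 0 \<and> (\<forall>\<phi> \<phi>' \<delta>. \<delta> \<ge> 0 \<longrightarrow> (\<forall>\<iota>\<in>Idx Ns. \<bar>\<phi> \<iota>\<bar> \<le> real r + 1 \<and> \<bar>\<phi>' \<iota>\<bar> \<le> real r + 1 \<and> \<bar>\<phi> \<iota> - \<phi>' \<iota>\<bar> \<le> \<delta>) \<longrightarrow>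
      (\<forall>k<n. \<bar>E \<phi> k - E \<phi>' k\<bar> \<le> Kf r * \<delta>))"
    by metis
  define Gr where "Gr r k = (\<lambda>z::int. real_of_int z / real k) ` {- int ((r + 1) * k) .. int ((r + 1) * k)}" for r k :: nat
  define grid where "grid r k = (PiE (Idx Ns) (\<lambda>_. Gr r k) :: ('d pidx \<Rightarrow> real) set)" for r k
  define cube where "cube c e = PiE {..<n} (\<lambda>i. {c i - e .. c i + (e::real)})" for c :: "nat \<Rightarrow> real" and e
  define cover where "cover r k = (\<Union>\<phi>\<in>grid r k. cube (E \<phi>) (Kf r / real k))" for r k
  define Nset where "Nset r = (\<Inter>k. cover r (Suc k))" for r
  define \<mu> where "\<mu> = PiM {..<n} (\<lambda>_. lborel :: real measure)"
  define Q where "Q = PiE {..<n} (\<lambda>_. {0..1::real})"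
  interpret PS: product_sigma_finite "\<lambda>_::nat. lborel :: real measure" by standard
  have finGr: "finite (Gr r k)" for r k unfolding Gr_def by simp
  have fingrid: "finite (grid r k)" for r k unfolding grid_def using finI finGr by (simp add: finite_PiE)
  have cube_sets: "cube c e \<in> sets \<mu>" for c e
    unfolding cube_def \<mu>_def by (rule sets_PiM_I_finite) auto
  have cover_sets: "cover r k \<in> sets \<mu>" for r k
    unfolding cover_def using fingrid cube_sets by (intro sets.finite_UN) auto
  have Nset_sets: "Nset r \<in> sets \<mu>" for r
    unfolding Nset_def using cover_sets by (intro sets.countable_INT) auto
  have cube_meas: "emeasure \<mu> (cube c e) = ennreal ((2 * e) ^ n)" if e0: "e \<ge> 0" for c e
  proof -
    have "emeasure \<mu> (cube c e) = (\<Prod>i<n. emeasure lborel {c i - e .. c i + e})"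
      unfolding \<mu>_def cube_def by (rule PS.emeasure_PiM) auto
    also have "\<dots> = (\<Prod>i<n. ennreal (2 * e))" using e0 by simp
    also have "\<dots> = ennreal (2 * e) ^ n" by simp
    also have "\<dots> = ennreal ((2 * e) ^ n)" using e0 by (simp add: ennreal_power)
    finally show ?thesis .
  qed
  have cardgrid: "card (grid r k) \<le> (2 * (r + 1) * k + 1) ^ P" for r k
  proof -
    have cG: "card (Gr r k) \<le> 2 * (r + 1) * k + 1"
    proof -
      have "card (Gr r k) \<le> card {- int ((r + 1) * k) .. int ((r + 1) * k)}"
        unfolding Gr_def by (rule card_image_le) simp
      also have "\<dots> = 2 * (r + 1) * k + 1"
      proof -
        have "int ((r + 1) * k) - - int ((r + 1) * k) + 1 = int (2 * (r + 1) * k + 1)" by simp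
        then show ?thesis by (simp only: card_atLeastAtMost_int nat_int)
      qed
      finally show ?thesis .
    qed
    have "card (grid r k) = (\<Prod>\<iota>\<in>(Idx Ns :: 'd pidx set). card (Gr r k))"
      unfolding grid_def using card_PiE[OF finI, of "\<lambda>_. Gr r k"] by simp
    also have "\<dots> = card (Gr r k) ^ P" by (simp add: P_def)
    also have "\<dots> \<le> (2 * (r + 1) * k + 1) ^ P" by (rule power_mono[OF cG]) simp
    finally show ?thesis .
  qed
  define C where "C r = (3 * (real r + 1)) ^ P * (2 * Kf r) ^ Suc P" for r
  have cover_meas: "emeasure \<mu> (cover r k) \<le> ennreal (C r / real k)" if k: "k \<ge> 1" for r k
  proof -
    have e0: "Kf r / real k \<ge> 0" using Kf by simp
    have "emeasure \<mu> (cover r k) \<le> (\<Sum>\<phi>\<in>grid r k. emeasure \<mu> (cube (E \<phi>) (Kf r / real k)))"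
      unfolding cover_def by (rule emeasure_subadditive_finite[OF fingrid]) (use cube_sets in auto)
    also have "\<dots> = (\<Sum>\<phi>\<in>grid r k. ennreal ((2 * (Kf r / real k)) ^ n))" by (simp add: cube_meas[OF e0])
    also have "\<dots> = of_nat (card (grid r k)) * ennreal ((2 * (Kf r / real k)) ^ n)" by simp
    also have "\<dots> = ennreal (real (card (grid r k)) * (2 * (Kf r / real k)) ^ n)"
      using e0 by (simp add: ennreal_of_nat_eq_real_of_nat ennreal_mult)
    also have "\<dots> \<le> ennreal (C r / real k)"
    proof (rule ennreal_leI)
      have "real (card (grid r k)) \<le> real (2 * (r + 1) * k + 1) ^ P"
        using cardgrid[of r k] by (metis of_nat_le_iff of_nat_power)
      then have "real (card (grid r k)) * (2 * (Kf r / real k)) ^ n \<le> real (2 * (r + 1) * k + 1) ^ P * (2 * (Kf r / real k)) ^ Suc P"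
      proof -
        have "0 \<le> (2 * (Kf r / real k)) ^ Suc P" by (rule zero_le_power) (use e0 in simp)
        then show ?thesis unfolding n P_def using \<open>real (card (grid r k)) \<le> real (2 * (r + 1) * k + 1) ^ P\<close>
          by (intro mult_right_mono) (simp_all add: P_def)
      qed
      also have "\<dots> \<le> C r / real k" unfolding C_def by (rule bound_ineq[OF k]) (use Kf in simp)
      finally show "real (card (grid r k)) * (2 * (Kf r / real k)) ^ n \<le> C r / real k" .
    qed
    finally show ?thesis .
  qed
  have Nset0: "emeasure \<mu> (Nset r) = 0" for r
  proof -
    have "emeasure \<mu> (Nset r) \<le> 0"
    proof (rule ennreal_le_epsilon)
      fix e :: real assume e: "0 < e"
      define k where "k = Suc (nat \<lceil>C r / e\<rceil>)"
      have k1: "k \<ge> 1" by (simp add: k_def)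
      have C0: "C r \<ge> 0" unfolding C_def using Kf by simp
      have "C r / e \<le> real k" unfolding k_def by linarith
      then have Ck: "C r / real k \<le> e" using e k1 by (simp add: field_simps)
      have "Nset r \<subseteq> cover r k" unfolding Nset_def k_def by auto
      then have "emeasure \<mu> (Nset r) \<le> emeasure \<mu> (cover r k)" by (rule emeasure_mono[OF _ cover_sets])
      also have "\<dots> \<le> ennreal (C r / real k)" by (rule cover_meas[OF k1])
      also have "\<dots> \<le> ennreal e" using Ck by (rule ennreal_leI)
      finally show "emeasure \<mu> (Nset r) \<le> 0 + ennreal e" by simp
    qed
    then show ?thesis by simp
  qed
  have QN: "Q \<subseteq> (\<Union>r. Nset r)"
  proof
    fix y assume yQ: "y \<in> Q"
    obtain \<theta> where th: "is_network Ns \<theta>" "\<forall>k<n. realization \<rho> \<Omega> Ns \<theta> (xs k) 0 = y k"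
      using surj by blast
    define \<phi> where "\<phi> = enc \<theta>"
    have Ey: "E \<phi> i = y i" if "i < n" for i
      unfolding E_def \<phi>_def dec_enc[OF th(1)] using th(2) that by simp
    define r where "r = nat \<lceil>\<Sum>\<iota>\<in>Idx Ns. \<bar>\<phi> \<iota>\<bar>\<rceil>"
    have \<phi>r: "\<bar>\<phi> \<iota>\<bar> \<le> real r" if "\<iota> \<in> Idx Ns" for \<iota>
    proof -
      have "\<bar>\<phi> \<iota>\<bar> \<le> (\<Sum>\<iota>\<in>Idx Ns. \<bar>\<phi> \<iota>\<bar>)" by (rule member_le_sum) (use that finI in auto)
      then show ?thesis unfolding r_def by linarith
    qed
    have "y \<in> Nset r" unfolding Nset_def
    proof
      fix k0 :: nat
      define k where "k = Suc k0"
      define kk where "kk = real k"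
      have kk1: "kk \<ge> 1" by (simp add: kk_def k_def)
      define t where "t = restrict (\<lambda>\<iota>. of_int \<lfloor>kk * \<phi> \<iota>\<rfloor> / kk) (Idx Ns)"
      have tfacts: "t \<iota> \<in> Gr r k \<and> \<bar>t \<iota>\<bar> \<le> real r + 1 \<and> \<bar>t \<iota> - \<phi> \<iota>\<bar> \<le> 1 / kk" if \<iota>: "\<iota> \<in> Idx Ns" for \<iota>
      proof -
        define z where "z = \<lfloor>kk * \<phi> \<iota>\<rfloor>"
        have tz: "t \<iota> = of_int z / kk" using \<iota> by (simp add: t_def z_def)
        have pr: "- real r \<le> \<phi> \<iota>" "\<phi> \<iota> \<le> real r" using \<phi>r[OF \<iota>] by linarith+
        have z1: "of_int z \<le> kk * \<phi> \<iota>" "kk * \<phi> \<iota> < of_int z + 1" unfolding z_def by linarith+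
        have m1: "kk * \<phi> \<iota> \<le> kk * real r" using pr(2) kk1 by (simp add: mult_left_mono)
        have m2: "- (kk * real r) \<le> kk * \<phi> \<iota>" using mult_left_mono[OF pr(1), of kk] kk1 by simp
        have zb: "\<bar>real_of_int z\<bar> \<le> (real r + 1) * kk"
        proof -
          have e: "(real r + 1) * kk = kk * real r + kk" by (simp add: algebra_simps)
          show ?thesis unfolding abs_le_iff e using z1 m1 m2 kk1 by linarith
        qed
        have zint: "real_of_int (int ((r + 1) * k)) = (real r + 1) * kk" by (simp add: kk_def algebra_simps)
        have "z \<in> {- int ((r + 1) * k) .. int ((r + 1) * k)}"
        proof -
          define a where "a = int ((r + 1) * k)"
          have A: "real_of_int a = (real r + 1) * kk" unfolding a_def by (rule zint)
          have "real_of_int z \<le> real_of_int a" "- real_of_int a \<le> real_of_int z"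
            using zb A unfolding abs_le_iff by linarith+
          then have "z \<le> a" "- a \<le> z" by (metis of_int_le_iff of_int_minus)+
          then show ?thesis unfolding a_def[symmetric] by simp
        qed
        then have "t \<iota> \<in> Gr r k" unfolding Gr_def tz kk_def by blast
        moreover have "\<bar>t \<iota>\<bar> \<le> real r + 1"
          unfolding tz using zb kk1 by (simp add: abs_divide divide_le_eq)
        moreover have "\<bar>t \<iota> - \<phi> \<iota>\<bar> \<le> 1 / kk"
        proof -
          have "t \<iota> - \<phi> \<iota> = (of_int z - kk * \<phi> \<iota>) / kk" unfolding tz using kk1 by (simp add: field_simps)
          moreover have "\<bar>of_int z - kk * \<phi> \<iota>\<bar> \<le> 1" using z1 by linarith
          ultimately show ?thesis using kk1 by (simp add: abs_divide divide_right_mono)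
        qed
        ultimately show ?thesis by blast
      qed
      have tg: "t \<in> grid r k" unfolding grid_def using tfacts by (auto simp: t_def PiE_iff)
      have close: "\<forall>i<n. \<bar>E t i - E \<phi> i\<bar> \<le> Kf r * (1 / kk)"
      proof -
        have "1 / kk \<ge> 0" using kk1 by simp
        moreover have "\<forall>\<iota>\<in>Idx Ns. \<bar>t \<iota>\<bar> \<le> real r + 1 \<and> \<bar>\<phi> \<iota>\<bar> \<le> real r + 1 \<and> \<bar>t \<iota> - \<phi> \<iota>\<bar> \<le> 1 / kk"
          using tfacts \<phi>r by fastforce
        ultimately show ?thesis using Kf by blast
      qed
      have "y \<in> cube (E t) (Kf r / real k)"
        unfolding cube_def PiE_iff
      proof (intro conjI ballI)
        fix i assume "i \<in> {..<n}"
        then have i: "i < n" by simp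
        have c1: "\<bar>E t i - E \<phi> i\<bar> \<le> Kf r * (1 / kk)" using close i by blast
        have c2: "\<bar>y i - E t i\<bar> = \<bar>E t i - E \<phi> i\<bar>" using Ey[OF i] by (simp add: abs_minus_commute)
        have c3: "Kf r * (1 / kk) = Kf r / real k" by (simp add: kk_def)
        have "\<bar>y i - E t i\<bar> \<le> Kf r / real k" unfolding c2 c3[symmetric] by (rule c1)
        then show "y i \<in> {E t i - Kf r / real k .. E t i + Kf r / real k}" by (simp add: abs_le_iff)
      next
        show "y \<in> extensional {..<n}" using yQ by (simp add: Q_def PiE_iff)
      qed
      then show "y \<in> cover r (Suc k0)" unfolding cover_def k_def using tg k_def by blast
    qed
    then show "y \<in> (\<Union>r. Nset r)" by blast
  qed
  have "emeasure \<mu> (\<Union>r. Nset r) = 0" by (rule emeasure_UN_eq_0) (use Nset0 Nset_sets in auto)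
  moreover have "emeasure \<mu> Q \<le> emeasure \<mu> (\<Union>r. Nset r)"
    by (rule emeasure_mono[OF QN]) (use Nset_sets in auto)
  moreover have "emeasure \<mu> Q = 1"
  proof -
    have "emeasure \<mu> Q = (\<Prod>i<n. emeasure lborel {0..1::real})"
      unfolding \<mu>_def Q_def by (rule PS.emeasure_PiM) auto
    then show ?thesis by simp
  qed
  ultimately show False by simp
qed

theorem theorem2p1:
  fixes \<rho> :: "real \<Rightarrow> real" and \<Omega> :: "(real ^ 'd::finite) set" and Ns :: "nat list"
  assumes "length Ns \<ge> 2"
    and "\<forall>N\<in>set Ns. N \<ge> 1"
    and "interior \<Omega> \<noteq> {}"
    and "locally_lipschitz \<rho>"
    and "fun_set_convex (RNN \<rho> \<Omega> Ns)"
  shows "is_polynomial_fun \<rho>"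
proof (rule ccontr)
  assume np: "\<not> is_polynomial_fun \<rho>"
  note L = assms(1) and pos = assms(2) and ll = assms(4) and cv = assms(5)
  have cont: "continuous_on UNIV \<rho>" by (rule ll_cont[OF ll])
  have rl: "\<forall>X. \<exists>K. K-lipschitz_on {-X..X} \<rho>" using ll_interval[OF ll] by blast
  obtain p0 q0 where pq: "\<rho> p0 \<noteq> \<rho> q0"
  proof -
    have "\<exists>p0 q0. \<rho> p0 \<noteq> \<rho> q0"
    proof (rule ccontr)
      assume "\<not> (\<exists>p0 q0. \<rho> p0 \<noteq> \<rho> q0)"
      then have "\<forall>x. \<rho> x = poly [:\<rho> 0:] x" by simp
      then show False using np unfolding is_polynomial_fun_def by blast
    qed
    then show ?thesis using that by blast
  qed
  define A0 where "A0 = \<rho> p0"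
  define A1 where "A1 = \<rho> q0"
  have A01: "A0 \<noteq> A1" using pq by (simp add: A0_def A1_def)
  obtain x0 \<epsilon> where \<epsilon>: "\<epsilon> > 0" "ball x0 \<epsilon> \<subseteq> \<Omega>"
    using assms(3) mem_interior by blast
  define e :: "real ^ 'd" where "e = (\<epsilon> / 2) *\<^sub>R axis undefined 1"
  have ne: "norm e = \<epsilon> / 2" using \<epsilon>(1) by (simp add: e_def)
  have ee: "e \<bullet> e = (\<epsilon> / 2)\<^sup>2" unfolding dot_square_norm ne ..
  have ee0: "e \<bullet> e > 0" using ee \<epsilon>(1) by simp
  define xpt where "xpt t = x0 + t *\<^sub>R e" for t :: real
  have xin: "xpt t \<in> \<Omega>" if "0 \<le> t" "t \<le> 1" for t
  proof -
    have "dist x0 (xpt t) = \<bar>t\<bar> * (\<epsilon> / 2)" by (simp add: xpt_def dist_norm ne)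
    also have "\<dots> < \<epsilon>" using that \<epsilon>(1) by (simp add: mult_le_cancel_right1)
    finally show ?thesis using \<epsilon>(2) by auto
  qed
  define w0 where "w0 = ((A1 - A0) / (e \<bullet> e)) *\<^sub>R e"
  define b0 where "b0 = A0 - w0 \<bullet> x0"
  have lin: "w0 \<bullet> xpt t + b0 = A0 + t * (A1 - A0)" for t
    using ee0 by (simp add: w0_def b0_def xpt_def inner_add_right field_simps)
  define a where "a = (q0 - p0) / (A1 - A0)"
  define b where "b = p0 - a * A0"
  have fa0: "\<rho> (a * A0 + b) = A0" by (simp add: b_def A0_def)
  have fa1: "\<rho> (a * A1 + b) = A1"
  proof -
    have d: "A1 - A0 \<noteq> 0" using A01 by simp
    have "a * (A1 - A0) = q0 - p0" unfolding a_def using d by simp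
    then have "a * A1 - a * A0 = q0 - p0" by (simp add: right_diff_distrib)
    then have "a * A1 + b = q0" unfolding b_def by linarith
    then show ?thesis by (simp add: A1_def)
  qed
  define Lm where "Lm = length Ns"
  define reps where "reps = replicate (Lm - 2) (a, b)"
  define hs where "hs \<alpha> \<beta> = reps @ [(\<alpha>, \<beta>)]" for \<alpha> \<beta>
  have hslen: "length (hs \<alpha> \<beta>) = length Ns - 1" for \<alpha> \<beta> using L by (simp add: hs_def reps_def Lm_def)
  define G where "G x = chain_eval \<rho> (w0 \<bullet> x + b0) reps" for x
  define net where "net \<alpha> \<beta> = (chain_net w0 b0 (hs \<alpha> \<beta>) :: 'd network)" for \<alpha> \<beta>
  have net_ok: "is_network Ns (net \<alpha> \<beta>)" for \<alpha> \<beta> unfolding net_def by (rule chain_net_ok[OF hslen L])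
  have net_val: "realization \<rho> \<Omega> Ns (net \<alpha> \<beta>) x 0 = \<rho> (\<alpha> * G x + \<beta>)" if "x \<in> \<Omega>" for \<alpha> \<beta> x
    unfolding net_def using chain_real[OF L pos hslen that]
    by (simp add: hs_def G_def chain_eval_append)
  define g where "g t = G (xpt t)" for t
  have g_alt: "g t = chain_eval \<rho> (A0 + t * (A1 - A0)) reps" for t by (simp add: g_def G_def lin)
  have gcont: "continuous_on {0..1} g"
  proof -
    have "continuous_on UNIV (\<lambda>t. chain_eval \<rho> (A0 + t * (A1 - A0)) reps)"
      by (rule continuous_on_compose2[OF chain_eval_cont[OF cont]]) (auto intro!: continuous_intros)
    then show ?thesis unfolding g_alt[abs_def] by (rule continuous_on_subset) simp
  qed
  have g0: "g 0 = A0" unfolding g_alt reps_def using chain_eval_fix[of \<rho> a A0 b, OF fa0] by simp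
  have g1: "g 1 = A1" unfolding g_alt reps_def using chain_eval_fix[of \<rho> a A1 b, OF fa1] by simp
  define n where "n = Suc (card (Idx Ns :: 'd pidx set))"
  define m where "m = card (Idx Ns :: 'd pidx set)"
  have m1: "m \<ge> 1"
  proof -
    have "IB 0 \<in> (Idx Ns :: 'd pidx set)" using L pos by (intro Idx_IB) (cases Ns; auto)
    then show ?thesis unfolding m_def using finite_Idx by (metis One_nat_def Suc_leI card_gt_0_iff empty_iff)
  qed
  have nm: "n = Suc m" by (simp add: n_def m_def)
  define z where "z k = A0 + (real k / real m) * (A1 - A0)" for k
  have "\<forall>k. \<exists>\<tau>. 0 \<le> \<tau> \<and> \<tau> \<le> 1 \<and> (k < n \<longrightarrow> g \<tau> = z k)"
  proof
    fix k
    show "\<exists>\<tau>. 0 \<le> \<tau> \<and> \<tau> \<le> 1 \<and> (k < n \<longrightarrow> g \<tau> = z k)"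
    proof (cases "k < n")
      case False then show ?thesis by (intro exI[of _ 0]) simp
    next
      case True
      then have km: "k \<le> m" using nm by simp
      have kt: "0 \<le> real k / real m" "real k / real m \<le> 1" using km m1 by simp_all
      show ?thesis
      proof (cases "A0 \<le> A1")
        case True
        have h1: "0 \<le> (real k / real m) * (A1 - A0)" using kt True by (intro mult_nonneg_nonneg) auto
        have h2: "(real k / real m) * (A1 - A0) \<le> 1 * (A1 - A0)" using kt True by (intro mult_right_mono) auto
        have h3: "(real k / real m) * (A1 - A0) \<le> A1 - A0" using h2 by simp
        have "A0 \<le> z k" using h1 unfolding z_def by linarith
        moreover have "z k \<le> A1" using h3 unfolding z_def by linarith
        ultimately have "A0 \<le> z k" "z k \<le> A1" by auto
        then obtain \<tau> where "0 \<le> \<tau>" "\<tau> \<le> 1" "g \<tau> = z k"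
          using IVT'[of g 0 "z k" 1, OF _ _ _ gcont] g0 g1 by auto
        then show ?thesis by blast
      next
        case False
        have h1: "(real k / real m) * (A1 - A0) \<le> 0" using kt False by (intro mult_nonneg_nonpos) auto
        have h2: "(1 - real k / real m) * (A1 - A0) \<le> 0" using kt False by (intro mult_nonneg_nonpos) auto
        have "A1 \<le> z k" "z k \<le> A0" unfolding z_def using h1 h2 by (simp_all add: algebra_simps)
        then obtain \<tau> where "0 \<le> \<tau>" "\<tau> \<le> 1" "g \<tau> = z k"
          using IVT2'[of g 1 "z k" 0, OF _ _ _ gcont] g0 g1 by auto
        then show ?thesis by blast
      qed
    qed
  qed
  then obtain \<tau> where \<tau>: "\<forall>k. 0 \<le> \<tau> k \<and> \<tau> k \<le> 1 \<and> (k < n \<longrightarrow> g (\<tau> k) = z k)" by metis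
  define xs where "xs k = xpt (\<tau> k)" for k
  have xsin: "xs k \<in> \<Omega>" for k using xin \<tau> by (simp add: xs_def)
  have xsval: "realization \<rho> \<Omega> Ns (net \<alpha> \<beta>) (xs k) 0 = \<rho> (\<alpha> * z k + \<beta>)" if "k < n" for \<alpha> \<beta> k
    using net_val[OF xsin] \<tau> that by (simp add: xs_def g_def)
  define S where "S = {(\<lambda>k. v (xs k) 0) | v. v \<in> RNN \<rho> \<Omega> Ns}"
  have inRNN: "realization \<rho> \<Omega> Ns (net \<alpha> \<beta>) \<in> RNN \<rho> \<Omega> Ns" for \<alpha> \<beta>
    unfolding RNN_def using net_ok by blast
  have s0: "(\<lambda>k. realization \<rho> \<Omega> Ns (net 0 0) (xs k) 0) \<in> S" unfolding S_def using inRNN by blast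
  have Sadd: "\<forall>u\<in>S. \<forall>w\<in>S. (\<lambda>i. u i + w i) \<in> S"
  proof (intro ballI)
    fix u w assume "u \<in> S" "w \<in> S"
    then obtain v1 v2 where v: "v1 \<in> RNN \<rho> \<Omega> Ns" "v2 \<in> RNN \<rho> \<Omega> Ns" "u = (\<lambda>k. v1 (xs k) 0)" "w = (\<lambda>k. v2 (xs k) 0)"
      unfolding S_def by blast
    have "(\<lambda>x i. v1 x i + v2 x i) \<in> RNN \<rho> \<Omega> Ns" by (rule RNN_add[OF L cv v(1,2)])
    then show "(\<lambda>i. u i + w i) \<in> S" unfolding S_def v(3,4) by force
  qed
  have Ssc: "\<forall>u\<in>S. \<forall>c. (\<lambda>i. c * u i) \<in> S"
  proof (intro ballI allI)
    fix u c assume "u \<in> S"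
    then obtain v1 where v: "v1 \<in> RNN \<rho> \<Omega> Ns" "u = (\<lambda>k. v1 (xs k) 0)" unfolding S_def by blast
    have "(\<lambda>x i. c * v1 x i) \<in> RNN \<rho> \<Omega> Ns" by (rule RNN_scale[OF L v(1)])
    then show "(\<lambda>i. c * u i) \<in> S" unfolding S_def v(2) by force
  qed
  from subspace_orth[OF s0 Sadd Ssc, of n] show False
  proof
    assume surj: "\<forall>y. \<exists>s\<in>S. \<forall>k<n. s k = y k"
    have "\<forall>y. \<exists>\<theta>. is_network Ns \<theta> \<and> (\<forall>k<n. realization \<rho> \<Omega> Ns \<theta> (xs k) 0 = y k)"
    proof
      fix y
      obtain s where s: "s \<in> S" "\<forall>k<n. s k = y k" using surj by blast
      then obtain v where v: "v \<in> RNN \<rho> \<Omega> Ns" "s = (\<lambda>k. v (xs k) 0)" unfolding S_def by blast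
      then obtain \<theta> where th: "is_network Ns \<theta>" "v = realization \<rho> \<Omega> Ns \<theta>" unfolding RNN_def by blast
      have "\<forall>k<n. realization \<rho> \<Omega> Ns \<theta> (xs k) 0 = y k" using s v th by simp
      then show "\<exists>\<theta>. is_network Ns \<theta> \<and> (\<forall>k<n. realization \<rho> \<Omega> Ns \<theta> (xs k) 0 = y k)"
        using th(1) by blast
    qed
    then show False using no_surj[OF rl L n_def] by blast
  next
    assume "\<exists>c. (\<exists>k<n. c k \<noteq> 0) \<and> (\<forall>s\<in>S. (\<Sum>k<n. c k * s k) = 0)"
    then obtain c where c: "\<exists>k<n. c k \<noteq> 0" "\<forall>s\<in>S. (\<Sum>k<n. c k * s k) = 0" by blast
    have "\<forall>\<beta> h. (\<Sum>k<n. c k * \<rho> (\<beta> + real k * h)) = 0"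
    proof (intro allI)
      fix \<beta> h
      define \<alpha> where "\<alpha> = h * real m / (A1 - A0)"
      define \<beta>' where "\<beta>' = \<beta> - \<alpha> * A0"
      have d: "A1 - A0 \<noteq> 0" using A01 by simp
      have mr: "real m \<noteq> 0" using m1 by simp
      have eq: "\<alpha> * z k + \<beta>' = \<beta> + real k * h" for k
      proof -
        have e1: "\<alpha> * z k + \<beta>' = \<alpha> * (real k / real m * (A1 - A0)) + \<beta>"
          by (simp add: z_def \<beta>'_def algebra_simps)
        have e2: "\<alpha> * (real k / real m * (A1 - A0)) = real k * h"
          unfolding \<alpha>_def using d mr by (simp add: field_simps)
        show ?thesis unfolding e1 e2 by simp
      qed
      have "(\<lambda>k. realization \<rho> \<Omega> Ns (net \<alpha> \<beta>') (xs k) 0) \<in> S" unfolding S_def using inRNN by blast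
      then have "(\<Sum>k<n. c k * realization \<rho> \<Omega> Ns (net \<alpha> \<beta>') (xs k) 0) = 0"
        using bspec[OF c(2)] by simp
      moreover have "(\<Sum>k<n. c k * realization \<rho> \<Omega> Ns (net \<alpha> \<beta>') (xs k) 0) = (\<Sum>k<n. c k * \<rho> (\<beta> + real k * h))"
        by (rule sum.cong) (simp_all add: xsval eq)
      ultimately show "(\<Sum>k<n. c k * \<rho> (\<beta> + real k * h)) = 0" by simp
    qed
    then have "\<exists>p. \<forall>x. \<rho> x = poly p x" using relation_poly[OF cont c(1)] by blast
    then show False using np unfolding is_polynomial_fun_def by blast
  qed
qed

end
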